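(* In the setting described in the context, let $i,j,k \in \{0,1,\dots,q\}$ be pairwise distinct with $k \geq 1$. Then there exists a constant $C$ (independent of $\gamma$ and $\lambda_0$) such that for every $\gamma \in (0,\frac12)$ there exists $\bar\lambda$ such that for all $\lambda_0 \geq \bar\lambda$, all $p \in \mathbb{R}^n$ and all $\lambda_0^{-1} \leq r \leq 1$, \begin{align*} &\big|\Omega \cap \{\hat u_k = 0\} \cap \{-2\lambda_k^{-1} \leq \hat u_{k-1} \leq 0\} \cap \{-2\lambda_k^{-1} \leq u_k \leq 0\} \\ &\quad \cap \{-4\lambda_0^{-1} \leq u_j \leq 0\} \cap \{-6\lambda_0^{-1} \leq u_i \leq 0\} \cap B_r(p)\big| \leq C \lambda_k^{-1}\lambda_0^{-1} r^{n-3}, \end{align*} where $|\cdot|$ denotes $(n-1)$-dimensional Hausdorff measure and $B_r(p)$ is the Euclidean ball of radius $r$ centered at $p$.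
   Context: $n\ge3$; $u_0,\dots,u_q$ are non-constant linear (affine) functions on $\mathbb{R}^n$ and $\Omega=\bigcap_{m=0}^q\{u_m\le 0\}$ is a compact convex polytope with non-empty interior, such that: (a) for each $k$, $\{u_k>0\}\cap\bigcap_{m\neq k}\{u_m\le0\}\neq\emptyset$; (b) the Euclidean gradient of each $u_k$ is a unit vector $N_k$; (c) for $j<k$, if some $x\in\Omega$ has $u_j(x)=u_k(x)=0$ then $\langle N_j,N_k\rangle\le0$. Fix a smooth even $\eta:\mathbb{R}\to\mathbb{R}$ with $\eta(t)=|t|$ for $|t|\ge\frac12$ and $\eta''\ge0$. For $\gamma\in(0,\frac12)$, $\lambda_0>1$ put $\lambda_k=\gamma^{-k}\lambda_0$, $\hat u_0=u_0$, $\hat u_k=\frac12\big(\hat u_{k-1}+u_k+\lambda_k^{-1}\eta(\lambda_k(\hat u_{k-1}-u_k))\big)$ for $1\le k\le q$. *)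

theory Defs
  imports "HOL-Analysis.Analysis"
begin

definition hausdorff_const :: "real \<Rightarrow> real" where
  "hausdorff_const s = pi powr (s / 2) / Gamma (s / 2 + 1)"

definition hausdorff_pre :: "real \<Rightarrow> real \<Rightarrow> 'a::metric_space set \<Rightarrow> ennreal" where
  "hausdorff_pre s \<delta> A =
     (INF C \<in> {C :: nat \<Rightarrow> 'a set. A \<subseteq> (\<Union>i. C i) \<and> (\<forall>i. bounded (C i) \<and> diameter (C i) \<le> \<delta>)}.
        (\<Sum>i. ennreal (hausdorff_const s * (diameter (C i) / 2) powr s)))"

definition hausdorff_measure :: "real \<Rightarrow> 'a::metric_space set \<Rightarrow> ennreal" where
  "hausdorff_measure s A = (SUP \<delta> \<in> {0<..}. hausdorff_pre s \<delta> A)"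

definition lam :: "real \<Rightarrow> real \<Rightarrow> nat \<Rightarrow> real" where
  "lam \<gamma> lam0 k = lam0 / \<gamma> ^ k"

fun uhat :: "(real \<Rightarrow> real) \<Rightarrow> real \<Rightarrow> real \<Rightarrow> (nat \<Rightarrow> 'a \<Rightarrow> real) \<Rightarrow> nat \<Rightarrow> 'a \<Rightarrow> real" where
  "uhat \<eta> \<gamma> lam0 u 0 x = u 0 x"
| "uhat \<eta> \<gamma> lam0 u (Suc k) x =
     (uhat \<eta> \<gamma> lam0 u k x + u (Suc k) x
      + \<eta> (lam \<gamma> lam0 (Suc k) * (uhat \<eta> \<gamma> lam0 u k x - u (Suc k) x)) / lam \<gamma> lam0 (Suc k)) / 2"

end

theory Submission
  imports Defs
begin


lemma eta_facts:
  fixes \<eta> :: "real \<Rightarrow> real"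
  assumes eta_smooth: "\<forall>m x. ((deriv ^^ m) \<eta> has_real_derivative (deriv ^^ Suc m) \<eta> x) (at x)"
    and eta_abs: "\<forall>t. \<bar>t\<bar> \<ge> 1/2 \<longrightarrow> \<eta> t = \<bar>t\<bar>"
    and eta_convex: "\<forall>t. (deriv ^^ 2) \<eta> t \<ge> 0"
  shows "\<bar>\<eta> x - \<eta> y\<bar> \<le> \<bar>x - y\<bar>"
proof -
  have d1: "(\<eta> has_real_derivative deriv \<eta> t) (at t)" for t
    using eta_smooth[rule_format, of 0 t] by simp
  have d2: "(deriv \<eta> has_real_derivative deriv (deriv \<eta>) t) (at t)" for t
    using eta_smooth[rule_format, of 1 t] by simp
  have c2: "deriv (deriv \<eta>) t \<ge> 0" for t
    using eta_convex[rule_format, of t] by (simp add: numeral_2_eq_2)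
  have mono: "deriv \<eta> a \<le> deriv \<eta> b" if "a \<le> b" for a b
    using DERIV_nonneg_imp_nondecreasing[OF that] d2 c2 by blast
  have p1: "deriv \<eta> t = 1" if "t > 1/2" for t
  proof -
    have "((\<lambda>x. x) has_real_derivative 1) (at t)" by (rule DERIV_ident)
    then have "(\<eta> has_real_derivative 1) (at t)"
      by (rule has_field_derivative_transform_within_open[where S="{1/2<..}"])
         (use that eta_abs in auto)
    then show ?thesis using d1 DERIV_unique by blast
  qed
  have m1: "deriv \<eta> t = -1" if "t < -1/2" for t
  proof -
    have "((\<lambda>x. -x) has_real_derivative -1) (at t)" by (rule DERIV_minus[OF DERIV_ident])
    then have "(\<eta> has_real_derivative -1) (at t)"
      by (rule has_field_derivative_transform_within_open[where S="{..<-1/2}"])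
         (use that eta_abs in auto)
    then show ?thesis using d1 DERIV_unique by blast
  qed
  have bd: "\<bar>deriv \<eta> t\<bar> \<le> 1" for t
  proof -
    have "deriv \<eta> t \<le> deriv \<eta> (max t 1)" by (rule mono) auto
    moreover have "deriv \<eta> (min t (-1)) \<le> deriv \<eta> t" by (rule mono) auto
    ultimately show ?thesis using p1[of "max t 1"] m1[of "min t (-1)"] by auto
  qed
  show ?thesis
  proof (cases "x = y")
    case True then show ?thesis by simp
  next
    case False
    { fix a b :: real assume "a < b"
      then obtain z where "\<eta> b - \<eta> a = (b - a) * deriv \<eta> z"
        using MVT2[of a b \<eta> "deriv \<eta>"] d1 by blast
      then have "\<bar>\<eta> b - \<eta> a\<bar> \<le> \<bar>b - a\<bar>"
        using bd[of z] by (simp add: abs_mult mult_left_le)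
    } note * = this
    show ?thesis using False *[of x y] *[of y x] by (cases "x < y") (auto simp: abs_minus_commute)
  qed
qed


definition smax :: "(real \<Rightarrow> real) \<Rightarrow> real \<Rightarrow> real \<Rightarrow> real \<Rightarrow> real" where
  "smax \<eta> l a b = (a + b + \<eta> (l * (a - b)) / l) / 2"

lemma uhat_Suc_smax: "uhat \<eta> \<gamma> lam0 u (Suc k) x = smax \<eta> (lam \<gamma> lam0 (Suc k)) (uhat \<eta> \<gamma> lam0 u k x) (u (Suc k) x)"
  by (simp add: smax_def)

locale etaL =
  fixes \<eta> :: "real \<Rightarrow> real"
  assumes lip: "\<And>x y. \<bar>\<eta> x - \<eta> y\<bar> \<le> \<bar>x - y\<bar>"
    and absv: "\<And>t. \<bar>t\<bar> \<ge> 1/2 \<Longrightarrow> \<eta> t = \<bar>t\<bar>"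
begin

lemma eta_ge: "\<bar>t\<bar> \<le> \<eta> t"
proof -
  have a: "\<eta> (1/2) = 1/2" "\<eta> (-1/2) = 1/2" using absv[of "1/2"] absv[of "-1/2"] by auto
  have "\<bar>\<eta> t - \<eta> (1/2)\<bar> \<le> \<bar>t - 1/2\<bar>" "\<bar>\<eta> t - \<eta> (-1/2)\<bar> \<le> \<bar>t + 1/2\<bar>"
    using lip[of t "1/2"] lip[of t "-1/2"] by auto
  then have "\<eta> t \<ge> 1/2 - \<bar>t - 1/2\<bar>" "\<eta> t \<ge> 1/2 - \<bar>t + 1/2\<bar>" using a by linarith+
  moreover have "\<bar>t\<bar> \<ge> 1/2 \<Longrightarrow> \<eta> t = \<bar>t\<bar>" by (rule absv)
  ultimately show ?thesis by (cases "\<bar>t\<bar> \<ge> 1/2") (auto simp: abs_if split: if_splits)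
qed

lemma eta_le: "\<eta> t \<le> \<bar>t\<bar> + 1"
proof -
  have a: "\<eta> (1/2) = 1/2" using absv[of "1/2"] by auto
  have "\<bar>\<eta> t - \<eta> (1/2)\<bar> \<le> \<bar>t - 1/2\<bar>" using lip[of t "1/2"] by auto
  then show ?thesis using a by (auto simp: abs_if split: if_splits)
qed

lemma smax_mono:
  assumes "l > 0" "a \<le> a'" "b \<le> b'"
  shows "smax \<eta> l a b \<le> smax \<eta> l a' b'"
proof -
  have "\<bar>\<eta> (l * (a' - b')) - \<eta> (l * (a - b))\<bar> \<le> \<bar>l * (a' - b') - l * (a - b)\<bar>" by (rule lip)
  also have "\<dots> = \<bar>l\<bar> * \<bar>(a' - a) - (b' - b)\<bar>" by (simp only: abs_mult[symmetric] algebra_simps)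
  also have "\<dots> = l * \<bar>(a' - a) - (b' - b)\<bar>" using assms by simp
  also have "\<dots> \<le> l * ((a' - a) + (b' - b))" using assms by (intro mult_left_mono) auto
  finally have "\<eta> (l * (a - b)) - \<eta> (l * (a' - b')) \<le> l * ((a' - a) + (b' - b))" by linarith
  then have "\<eta> (l * (a - b)) / l - \<eta> (l * (a' - b')) / l \<le> (a' - a) + (b' - b)"
    using assms by (simp add: field_simps)
  then show ?thesis unfolding smax_def by (simp add: field_simps)
qed

lemma smax_shift: "smax \<eta> l (a + s) (b + s) = smax \<eta> l a b + s"
  unfolding smax_def by (simp add: field_simps)

lemma smax_ge: assumes "l > 0" shows "max a b \<le> smax \<eta> l a b"
proof -
  have la: "\<bar>l * (a - b)\<bar> = l * \<bar>a - b\<bar>" using assms by (simp add: abs_mult)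
  have "\<bar>l * (a - b)\<bar> \<le> \<eta> (l * (a - b))" by (rule eta_ge)
  then have "l * \<bar>a - b\<bar> \<le> \<eta> (l * (a - b))" by (simp only: la)
  then have "\<bar>a - b\<bar> \<le> \<eta> (l * (a - b)) / l" using assms by (simp add: field_simps)
  then show ?thesis unfolding smax_def by (auto simp: abs_if max_def split: if_splits)
qed

lemma smax_le: assumes "l > 0" shows "smax \<eta> l a b \<le> max a b + 1 / (2 * l)"
proof -
  have la: "\<bar>l * (a - b)\<bar> = l * \<bar>a - b\<bar>" using assms by (simp add: abs_mult)
  have "\<eta> (l * (a - b)) \<le> \<bar>l * (a - b)\<bar> + 1" by (rule eta_le)
  then have "\<eta> (l * (a - b)) \<le> l * \<bar>a - b\<bar> + 1" by (simp only: la)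
  then have "\<eta> (l * (a - b)) / l \<le> \<bar>a - b\<bar> + 1 / l" using assms by (simp add: field_simps)
  then show ?thesis unfolding smax_def by (auto simp: abs_if max_def field_simps split: if_splits)
qed

lemma smax_exact: assumes "l > 0" "\<bar>a - b\<bar> \<ge> 1 / (2 * l)" shows "smax \<eta> l a b = max a b"
proof -
  have la: "\<bar>l * (a - b)\<bar> = l * \<bar>a - b\<bar>" using assms by (simp add: abs_mult)
  have "l * \<bar>a - b\<bar> \<ge> 1/2" using assms by (simp add: field_simps)
  then have "\<bar>l * (a - b)\<bar> \<ge> 1/2" by (simp only: la)
  then have "\<eta> (l * (a - b)) = \<bar>l * (a - b)\<bar>" by (rule absv)
  then have "\<eta> (l * (a - b)) / l = \<bar>a - b\<bar>" using assms by (simp add: abs_mult)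
  then show ?thesis unfolding smax_def by (auto simp: abs_if max_def)
qed

lemma smax_eq_opp:
  assumes "l > 0" "smax \<eta> l a b = smax \<eta> l a' b'"
  shows "\<bar>a - a'\<bar> \<le> \<bar>(a - b) - (a' - b')\<bar> \<and> \<bar>b - b'\<bar> \<le> \<bar>(a - b) - (a' - b')\<bar>"
proof -
  have no: False if "a < a2" "b < b2" "smax \<eta> l a b = smax \<eta> l a2 b2" for a b a2 b2
  proof -
    define m where "m = min (a2 - a) (b2 - b)"
    have "m > 0" using that by (simp add: m_def)
    have "smax \<eta> l (a + m) (b + m) \<le> smax \<eta> l a2 b2"
      by (rule smax_mono) (use assms that in \<open>auto simp: m_def\<close>)
    then show False using smax_shift[of l a m b] \<open>m > 0\<close> that by simp
  qed
  have "\<not> (a < a' \<and> b < b')" using no[of a a' b b'] assms by auto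
  moreover have "\<not> (a' < a \<and> b' < b)" using no[of a' a b' b] assms by auto
  ultimately show ?thesis by auto
qed

lemma lam_ge: assumes "lam0 > 0" "0 < \<gamma>" "\<gamma> \<le> 1" shows "lam \<gamma> lam0 k \<ge> lam0"
proof -
  have "\<gamma> ^ k \<le> 1" "\<gamma> ^ k > 0" using assms by (auto simp: power_le_one)
  then show ?thesis using assms unfolding lam_def by (simp add: field_simps mult_left_le)
qed

lemma uhat_mono:
  assumes "lam0 > 0" "0 < \<gamma>" "\<gamma> \<le> 1" "\<forall>l\<le>m. u l x \<le> v l y"
  shows "uhat \<eta> \<gamma> lam0 u m x \<le> uhat \<eta> \<gamma> lam0 v m y"
  using assms(4)
proof (induction m)
  case 0 then show ?case by simp
next
  case (Suc m)
  have "lam \<gamma> lam0 (Suc m) > 0" using lam_ge[OF assms(1-3), of "Suc m"] assms(1) by linarith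
  then show ?case unfolding uhat_Suc_smax using Suc by (intro smax_mono) auto
qed

lemma uhat_shift:
  assumes "\<forall>l\<le>m. v l y = u l x + s"
  shows "uhat \<eta> \<gamma> lam0 v m y = uhat \<eta> \<gamma> lam0 u m x + s"
  using assms
proof (induction m)
  case 0 then show ?case by simp
next
  case (Suc m)
  then show ?case unfolding uhat_Suc_smax using smax_shift by auto
qed

lemma uhat_ge:
  assumes "lam0 > 0" "0 < \<gamma>" "\<gamma> \<le> 1" "l \<le> m"
  shows "u l x \<le> uhat \<eta> \<gamma> lam0 u m x"
  using assms(4)
proof (induction m)
  case 0 then show ?case by simp
next
  case (Suc m)
  have lp: "lam \<gamma> lam0 (Suc m) > 0" using lam_ge[OF assms(1-3), of "Suc m"] assms(1) by linarith
  show ?case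
  proof (cases "l = Suc m")
    case True then show ?thesis unfolding uhat_Suc_smax using smax_ge[OF lp] by force
  next
    case False
    then have "u l x \<le> uhat \<eta> \<gamma> lam0 u m x" using Suc by auto
    also have "\<dots> \<le> max (uhat \<eta> \<gamma> lam0 u m x) (u (Suc m) x)" by simp
    also have "\<dots> \<le> smax \<eta> (lam \<gamma> lam0 (Suc m)) (uhat \<eta> \<gamma> lam0 u m x) (u (Suc m) x)" by (rule smax_ge[OF lp])
    finally show ?thesis unfolding uhat_Suc_smax .
  qed
qed

lemma uhat_irrel:
  assumes "lam0 > 0" "0 < \<gamma>" "\<gamma> \<le> 1" "real (m + 1) \<le> 2 * D * lam0"
    and "\<forall>l\<le>m. (l \<in> P \<longrightarrow> u l x = v l y \<and> \<alpha> \<le> u l x) \<and> (l \<notin> P \<longrightarrow> u l x \<le> \<alpha> - D \<and> v l y \<le> \<alpha> - D)"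
  shows "((\<forall>l\<le>m. l \<notin> P) \<longrightarrow> uhat \<eta> \<gamma> lam0 u m x \<le> \<alpha> - D + m / (2 * lam0) \<and> uhat \<eta> \<gamma> lam0 v m y \<le> \<alpha> - D + m / (2 * lam0))
     \<and> ((\<exists>l\<le>m. l \<in> P) \<longrightarrow> uhat \<eta> \<gamma> lam0 u m x = uhat \<eta> \<gamma> lam0 v m y \<and> \<alpha> \<le> uhat \<eta> \<gamma> lam0 u m x)"
  using assms(4,5)
proof (induction m)
  case 0 then show ?case by auto
next
  case (Suc m)
  define l1 where "l1 = lam \<gamma> lam0 (Suc m)"
  have l1: "l1 \<ge> lam0" using lam_ge[OF assms(1-3)] by (simp add: l1_def)
  have l1p: "l1 > 0" using l1 assms(1) by linarith
  have inv: "1 / (2 * l1) \<le> 1 / (2 * lam0)" using l1 assms(1) by (simp add: frac_le)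
  have IH: "((\<forall>l\<le>m. l \<notin> P) \<longrightarrow> uhat \<eta> \<gamma> lam0 u m x \<le> \<alpha> - D + m / (2 * lam0) \<and> uhat \<eta> \<gamma> lam0 v m y \<le> \<alpha> - D + m / (2 * lam0))
     \<and> ((\<exists>l\<le>m. l \<in> P) \<longrightarrow> uhat \<eta> \<gamma> lam0 u m x = uhat \<eta> \<gamma> lam0 v m y \<and> \<alpha> \<le> uhat \<eta> \<gamma> lam0 u m x)"
  proof -
    have p1: "real (m + 1) \<le> 2 * D * lam0" using Suc.prems(1) by simp
    have p2: "\<forall>l\<le>m. (l \<in> P \<longrightarrow> u l x = v l y \<and> \<alpha> \<le> u l x) \<and> (l \<notin> P \<longrightarrow> u l x \<le> \<alpha> - D \<and> v l y \<le> \<alpha> - D)"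
      using Suc.prems(2) le_SucI by blast
    show ?thesis by (rule Suc.IH[OF p1 p2])
  qed
  have hs: "Suc m \<in> P \<longrightarrow> u (Suc m) x = v (Suc m) y \<and> \<alpha> \<le> u (Suc m) x"
       "Suc m \<notin> P \<longrightarrow> u (Suc m) x \<le> \<alpha> - D \<and> v (Suc m) y \<le> \<alpha> - D"
    using Suc.prems(2) by auto
  have Dm: "real m / (2 * lam0) + 1 / (2 * lam0) \<le> D" using Suc.prems(1) assms(1)
    by (simp add: field_simps)
  have Dpos: "1 / (2 * lam0) \<le> D" using Dm assms(1) by (smt (verit) divide_nonneg_pos of_nat_0_le_iff)
  have Dp: "D > 0" using Dpos assms(1) by (smt (verit) divide_pos_pos)
  let ?U = "uhat \<eta> \<gamma> lam0 u m x" and ?V = "uhat \<eta> \<gamma> lam0 v m y"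
  show ?case
  proof (cases "\<exists>l\<le>m. l \<in> P")
    case True
    then have eq: "?U = ?V" and ge: "\<alpha> \<le> ?U" using IH by auto
    have ex: "\<exists>l\<le>Suc m. l \<in> P" using True le_SucI by blast
    show ?thesis
    proof (cases "Suc m \<in> P")
      case True
      then show ?thesis using ex eq ge hs smax_ge[OF l1p, of ?U "u (Suc m) x"]
        unfolding uhat_Suc_smax l1_def[symmetric] by auto
    next
      case False
      then have a: "u (Suc m) x \<le> \<alpha> - D" "v (Suc m) y \<le> \<alpha> - D" using hs by auto
      have e1: "smax \<eta> l1 ?U (u (Suc m) x) = ?U"
        using smax_exact[OF l1p, of ?U "u (Suc m) x"] a ge inv Dpos Dp by auto
      have e2: "smax \<eta> l1 ?V (v (Suc m) y) = ?V"
        using smax_exact[OF l1p, of ?V "v (Suc m) y"] a ge eq inv Dpos Dp by auto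
      show ?thesis using ex e1 e2 eq ge unfolding uhat_Suc_smax l1_def[symmetric] by auto
    qed
  next
    case False
    then have b: "?U \<le> \<alpha> - D + m / (2 * lam0)" "?V \<le> \<alpha> - D + m / (2 * lam0)" using IH by auto
    show ?thesis
    proof (cases "Suc m \<in> P")
      case True
      then have a: "u (Suc m) x = v (Suc m) y" "\<alpha> \<le> u (Suc m) x" using hs by auto
      have g1: "u (Suc m) x - ?U \<ge> 1 / (2 * l1)" using a b inv Dm by linarith
      have g2: "v (Suc m) y - ?V \<ge> 1 / (2 * l1)" using a b inv Dm by linarith
      have l1i: "1 / (2 * l1) > 0" using l1p by simp
      have e1: "smax \<eta> l1 ?U (u (Suc m) x) = u (Suc m) x"
        using smax_exact[OF l1p, of ?U "u (Suc m) x"] g1 l1i by (auto simp: abs_if max_def)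
      have e2: "smax \<eta> l1 ?V (v (Suc m) y) = v (Suc m) y"
        using smax_exact[OF l1p, of ?V "v (Suc m) y"] g2 l1i by (auto simp: abs_if max_def)
      have ex: "\<exists>l\<le>Suc m. l \<in> P" using True le_SucI by blast
      show ?thesis using ex e1 e2 a unfolding uhat_Suc_smax l1_def[symmetric] by auto
    next
      case F2: False
      then have nx: "\<forall>l\<le>Suc m. l \<notin> P" using False le_Suc_eq by auto
      have a: "u (Suc m) x \<le> \<alpha> - D" "v (Suc m) y \<le> \<alpha> - D" using hs F2 by auto
      have mp: "real m / (2 * lam0) \<ge> 0" using assms(1) by simp
      have s1: "smax \<eta> l1 ?U (u (Suc m) x) \<le> max ?U (u (Suc m) x) + 1 / (2 * l1)" by (rule smax_le[OF l1p])
      have s2: "smax \<eta> l1 ?V (v (Suc m) y) \<le> max ?V (v (Suc m) y) + 1 / (2 * l1)" by (rule smax_le[OF l1p])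
      have eqs: "real (Suc m) / (2 * lam0) = m / (2 * lam0) + 1 / (2 * lam0)" by (simp add: add_divide_distrib)
      have m1: "max ?U (u (Suc m) x) \<le> \<alpha> - D + m / (2 * lam0)" using a b mp by simp
      have m2: "max ?V (v (Suc m) y) \<le> \<alpha> - D + m / (2 * lam0)" using a b mp by simp
      have r1: "smax \<eta> l1 ?U (u (Suc m) x) \<le> \<alpha> - D + real (Suc m) / (2 * lam0)"
        using s1 m1 inv eqs by linarith
      have r2: "smax \<eta> l1 ?V (v (Suc m) y) \<le> \<alpha> - D + real (Suc m) / (2 * lam0)"
        using s2 m2 inv eqs by linarith
      show ?thesis using nx r1 r2 unfolding uhat_Suc_smax l1_def[symmetric] by auto
    qed
  qed
qed

end


lemma hc_nonneg: assumes "s \<ge> 0" shows "hausdorff_const s \<ge> 0"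
proof -
  have "Gamma (s / 2 + 1) > 0" using assms by (intro Gamma_real_pos) simp
  then show ?thesis unfolding hausdorff_const_def by simp
qed

lemma pre_le_finite:
  fixes A :: "'a::metric_space set"
  assumes fin: "finite F" and cov: "A \<subseteq> \<Union>F" and bd: "\<forall>c\<in>F. bounded c \<and> diameter c \<le> \<delta>"
    and dp: "\<delta> > 0" and sp: "s > 0"
  shows "hausdorff_pre s \<delta> A \<le> ennreal (\<Sum>c\<in>F. hausdorff_const s * (diameter c / 2) powr s)"
proof -
  obtain h where h: "bij_betw h {0..<card F} F" using ex_bij_betw_nat_finite[OF fin] by blast
  define C where "C i = (if i < card F then h i else {})" for i
  have hc: "hausdorff_const s \<ge> 0" using hc_nonneg sp by simp
  have Cin: "C \<in> {C. A \<subseteq> (\<Union>i. C i) \<and> (\<forall>i. bounded (C i) \<and> diameter (C i) \<le> \<delta>)}"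
  proof (safe)
    fix x assume "x \<in> A"
    then obtain c where "c \<in> F" "x \<in> c" using cov by auto
    then have "c \<in> h ` {0..<card F}" using h by (simp add: bij_betw_def)
    then obtain i where "i < card F" "h i = c" by auto
    then show "x \<in> (\<Union>i. C i)" using \<open>x \<in> c\<close> by (auto simp: C_def)
  next
    fix i show "bounded (C i)" using bd h by (auto simp: C_def bij_betw_def)
  next
    fix i show "diameter (C i) \<le> \<delta>" using bd h dp by (auto simp: C_def bij_betw_def)
  qed
  have "hausdorff_pre s \<delta> A \<le> (\<Sum>i. ennreal (hausdorff_const s * (diameter (C i) / 2) powr s))"
    unfolding hausdorff_pre_def by (rule INF_lower[OF Cin])
  also have "\<dots> = (\<Sum>i\<in>{0..<card F}. ennreal (hausdorff_const s * (diameter (C i) / 2) powr s))"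
    by (rule suminf_finite) (auto simp: C_def)
  also have "\<dots> = (\<Sum>i\<in>{0..<card F}. ennreal (hausdorff_const s * (diameter (h i) / 2) powr s))"
    by (rule sum.cong) (auto simp: C_def)
  also have "\<dots> = (\<Sum>c\<in>F. ennreal (hausdorff_const s * (diameter c / 2) powr s))"
    using sum.reindex_bij_betw[OF h, of "\<lambda>c. ennreal (hausdorff_const s * (diameter c / 2) powr s)"] by simp
  also have "\<dots> = ennreal (\<Sum>c\<in>F. hausdorff_const s * (diameter c / 2) powr s)"
    by (rule sum_ennreal) (use hc in auto)
  finally show ?thesis .
qed

lemma hm_le:
  fixes A :: "'a::metric_space set"
  assumes sp: "s > 0"
    and H: "\<forall>\<delta>>0. \<exists>F. finite F \<and> A \<subseteq> \<Union>F \<and> (\<forall>c\<in>F. bounded c \<and> diameter c \<le> \<delta>) \<and> (\<Sum>c\<in>F. (diameter c / 2) powr s) \<le> B"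
  shows "hausdorff_measure s A \<le> ennreal (hausdorff_const s * B)"
  unfolding hausdorff_measure_def
proof (rule SUP_least)
  fix \<delta> :: real assume "\<delta> \<in> {0<..}"
  then have dp: "\<delta> > 0" by simp
  then obtain F where F: "finite F" "A \<subseteq> \<Union>F" "\<forall>c\<in>F. bounded c \<and> diameter c \<le> \<delta>"
     "(\<Sum>c\<in>F. (diameter c / 2) powr s) \<le> B" using H by blast
  have hc: "hausdorff_const s \<ge> 0" using hc_nonneg sp by simp
  have "hausdorff_pre s \<delta> A \<le> ennreal (\<Sum>c\<in>F. hausdorff_const s * (diameter c / 2) powr s)"
    by (rule pre_le_finite[OF F(1-3) dp sp])
  also have "\<dots> \<le> ennreal (hausdorff_const s * B)"
    using F(4) hc by (intro ennreal_leI) (simp add: sum_distrib_left[symmetric] mult_left_mono)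
  finally show "hausdorff_pre s \<delta> A \<le> ennreal (hausdorff_const s * B)" .
qed


lemma grid_cover:
  fixes E :: "'a::euclidean_space set" and T :: "'a set" and P :: "'a \<Rightarrow> 'a"
  assumes finE: "finite E" and orthE: "pairwise orthogonal E" and normE: "\<forall>e\<in>E. norm e = 1"
    and nE: "E \<noteq> {}" and lohi: "\<forall>e\<in>E. lo e < hi e" and Lp: "L > 0"
    and Lip: "\<forall>x\<in>T. \<forall>y\<in>T. dist x y \<le> L * dist (P x) (P y)"
    and img: "\<forall>x\<in>T. P x \<in> span E \<and> (\<forall>e\<in>E. lo e \<le> P x \<bullet> e \<and> P x \<bullet> e \<le> hi e)"
    and dp: "\<delta> > 0"
  shows "\<exists>F. finite F \<and> T \<subseteq> \<Union>F \<and> (\<forall>c\<in>F. bounded c \<and> diameter c \<le> \<delta>)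
            \<and> (\<Sum>c\<in>F. (diameter c / 2) powr real (card E)) \<le> (L * card E) ^ card E * (\<Prod>e\<in>E. hi e - lo e)"
proof -
  define m where "m = card E"
  have m1: "m \<ge> 1" using finE nE by (simp add: m_def Suc_le_eq card_gt_0_iff)
  define h where "h = min (\<delta> / (L * m)) (Min ((\<lambda>e. hi e - lo e) ` E))"
  have hp: "h > 0" using dp Lp m1 lohi finE nE by (auto simp: h_def)
  have hle: "h \<le> hi e - lo e" if "e \<in> E" for e
    using that finE unfolding h_def by (meson Min_le finite_imageI image_eqI min.coboundedI2 order_trans)
  have hd: "L * m * h \<le> \<delta>"
  proof -
    have "h \<le> \<delta> / (L * m)" by (simp add: h_def)
    then show ?thesis using Lp m1 by (simp add: field_simps)
  qed
  define M where "M e = nat \<lceil>(hi e - lo e) / h\<rceil>" for e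
  have M1: "real (M e) \<ge> (hi e - lo e) / h" for e unfolding M_def by linarith
  have M2: "real (M e) \<le> 2 * (hi e - lo e) / h" if "e \<in> E" for e
  proof -
    have "1 \<le> (hi e - lo e) / h" using hle[OF that] hp by simp
    then show ?thesis unfolding M_def by linarith
  qed
  have Mpos: "M e \<ge> 1" if "e \<in> E" for e
  proof -
    have "(hi e - lo e) / h > 0" using lohi that hp by simp
    then show ?thesis unfolding M_def by linarith
  qed
  define G where "G = PiE E (\<lambda>e. {..<M e})"
  have finG: "finite G" using finE by (simp add: G_def finite_PiE)
  have cardG: "card G = (\<Prod>e\<in>E. M e)" using finE by (simp add: G_def card_PiE)
  define cell where "cell g = {x\<in>T. \<forall>e\<in>E. lo e + g e * h \<le> P x \<bullet> e \<and> P x \<bullet> e \<le> lo e + (g e + 1) * h}" for g :: "'a \<Rightarrow> nat"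
  have ndist: "norm (P x - P y) \<le> m * h" if "x \<in> cell g" "y \<in> cell g" for x y g
  proof -
    have xy: "x \<in> T" "y \<in> T" using that by (auto simp: cell_def)
    have sp: "P x - P y \<in> span E" using img xy by (simp add: span_diff)
    have "P x - P y = (\<Sum>e\<in>E. ((P x - P y) \<bullet> e) *\<^sub>R e)"
      using orthonormal_basis_expand[OF orthE _ sp finE] normE by simp
    then have "norm (P x - P y) \<le> (\<Sum>e\<in>E. norm (((P x - P y) \<bullet> e) *\<^sub>R e))"
      by (metis norm_sum)
    also have "\<dots> = (\<Sum>e\<in>E. \<bar>(P x - P y) \<bullet> e\<bar>)" using normE by (intro sum.cong) auto
    also have "\<dots> \<le> (\<Sum>e\<in>E. h)"
    proof (rule sum_mono)
      fix e assume "e \<in> E"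
      then have "lo e + g e * h \<le> P x \<bullet> e \<and> P x \<bullet> e \<le> lo e + (g e + 1) * h"
          "lo e + g e * h \<le> P y \<bullet> e \<and> P y \<bullet> e \<le> lo e + (g e + 1) * h"
        using that by (auto simp: cell_def)
      then show "\<bar>(P x - P y) \<bullet> e\<bar> \<le> h" by (simp add: inner_diff_left algebra_simps abs_le_iff)
    qed
    also have "\<dots> = m * h" by (simp add: m_def)
    finally show ?thesis .
  qed
  have cdist: "dist x y \<le> L * m * h" if "x \<in> cell g" "y \<in> cell g" for x y g
  proof -
    have "x \<in> T" "y \<in> T" using that by (auto simp: cell_def)
    then have "dist x y \<le> L * dist (P x) (P y)" using Lip by blast
    also have "\<dots> \<le> L * (m * h)" using ndist[OF that] Lp by (simp add: dist_norm)
    finally show ?thesis by simp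
  qed
  have cbd: "bounded (cell g)" for g
    unfolding bounded_two_points using cdist by blast
  have cdiam: "diameter (cell g) \<le> L * m * h" for g
    by (rule diameter_le) (use cdist hp Lp in \<open>auto simp: dist_norm\<close>)
  define F where "F = cell ` G"
  have cov: "T \<subseteq> \<Union>F"
  proof
    fix x assume xT: "x \<in> T"
    define g where "g e = (if e \<in> E then min (nat \<lfloor>(P x \<bullet> e - lo e) / h\<rfloor>) (M e - 1) else undefined)" for e
    have "min (nat \<lfloor>(P x \<bullet> e - lo e) / h\<rfloor>) (M e - 1) < M e" if "e \<in> E" for e
      using Mpos[OF that] by linarith
    then have gG: "g \<in> G" unfolding G_def g_def by (auto simp: PiE_def extensional_def)
    have "\<forall>e\<in>E. lo e + real (g e) * h \<le> P x \<bullet> e \<and> P x \<bullet> e \<le> lo e + (real (g e) + 1) * h"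
    proof (intro ballI conjI)
      fix e assume eE: "e \<in> E"
      have b: "lo e \<le> P x \<bullet> e" "P x \<bullet> e \<le> hi e" using img xT eE by auto
      define t where "t = (P x \<bullet> e - lo e) / h"
      have t0: "t \<ge> 0" using b hp by (simp add: t_def)
      have "(P x \<bullet> e - lo e) / h \<le> (hi e - lo e) / h" using b hp by (intro divide_right_mono) auto
      then have tM: "t \<le> real (M e)" using M1[of e] by (simp add: t_def)
      have fl: "real (nat \<lfloor>t\<rfloor>) \<le> t" "t < real (nat \<lfloor>t\<rfloor>) + 1" using t0 by linarith+
      have xe: "P x \<bullet> e = lo e + t * h" using hp by (simp add: t_def)
      show "lo e + real (g e) * h \<le> P x \<bullet> e"
      proof -
        have "real (g e) \<le> t" using fl eE by (auto simp: g_def t_def[symmetric])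
        then show ?thesis using xe hp by (simp add: mult_right_mono)
      qed
      show "P x \<bullet> e \<le> lo e + (real (g e) + 1) * h"
      proof (cases "nat \<lfloor>t\<rfloor> \<le> M e - 1")
        case True
        then have "g e = nat \<lfloor>t\<rfloor>" using eE by (simp add: g_def t_def[symmetric])
        then have "t \<le> real (g e) + 1" using fl by simp
        then show ?thesis using xe hp by (simp add: mult_right_mono)
      next
        case False
        then have "g e = M e - 1" using eE by (simp add: g_def t_def[symmetric])
        then have "real (g e) + 1 = real (M e)" using Mpos[OF eE] by simp
        then have "t \<le> real (g e) + 1" using tM by simp
        then show ?thesis using xe hp by (simp add: mult_right_mono)
      qed
    qed
    then have "x \<in> cell g" using xT unfolding cell_def by (simp add: add.commute)
    then show "x \<in> \<Union>F" using gG by (auto simp: F_def)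
  qed
  have powr_eq: "(diameter c / 2) powr real m \<le> (L * m * h / 2) ^ m" if cF: "c \<in> F" for c
  proof -
    obtain g where c: "c = cell g" using cF unfolding F_def by blast
    have d0: "diameter c \<ge> 0" using c cbd diameter_ge_0 by blast
    have "(diameter c / 2) powr real m \<le> (L * m * h / 2) powr real m"
      by (rule powr_mono2) (use d0 cdiam c in auto)
    also have "\<dots> = (L * m * h / 2) ^ m" using Lp m1 hp by (intro powr_realpow) simp
    finally show ?thesis .
  qed
  have "(\<Sum>c\<in>F. (diameter c / 2) powr real m) \<le> (\<Sum>g\<in>G. (diameter (cell g) / 2) powr real m)"
    unfolding F_def using sum_image_le[OF finG, of "\<lambda>c. (diameter c / 2) powr real m" cell] by (simp add: o_def)
  also have "\<dots> \<le> (\<Sum>g\<in>G. (L * m * h / 2) ^ m)"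
    by (rule sum_mono) (use powr_eq in \<open>auto simp: F_def\<close>)
  also have "\<dots> = real (\<Prod>e\<in>E. M e) * (L * m * h / 2) ^ m" using cardG by simp
  also have "\<dots> = (\<Prod>e\<in>E. real (M e) * (L * m * h / 2))"
    by (simp only: prod.distrib prod_constant m_def of_nat_prod)
  also have "\<dots> \<le> (\<Prod>e\<in>E. (2 * (hi e - lo e) / h) * (L * m * h / 2))"
  proof (rule prod_mono)
    fix e assume eE: "e \<in> E"
    have "L * m * h / 2 \<ge> 0" using Lp hp by simp
    then show "0 \<le> real (M e) * (L * m * h / 2) \<and> real (M e) * (L * m * h / 2) \<le> (2 * (hi e - lo e) / h) * (L * m * h / 2)"
      using M2[OF eE] by (intro conjI mult_right_mono) auto
  qed
  also have "\<dots> = (\<Prod>e\<in>E. (L * m) * (hi e - lo e))"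
    by (rule prod.cong) (use hp in \<open>auto simp: field_simps\<close>)
  also have "\<dots> = (L * m) ^ m * (\<Prod>e\<in>E. hi e - lo e)"
    by (simp add: prod.distrib m_def power_mult_distrib)
  finally have S: "(\<Sum>c\<in>F. (diameter c / 2) powr real m) \<le> (L * m) ^ m * (\<Prod>e\<in>E. hi e - lo e)" .
  show ?thesis
  proof (intro exI[of _ F] conjI)
    show "finite F" using finG by (simp add: F_def)
    show "T \<subseteq> \<Union>F" by (rule cov)
    show "\<forall>c\<in>F. bounded c \<and> diameter c \<le> \<delta>" using cbd cdiam hd by (auto simp: F_def intro: order_trans)
    show "(\<Sum>c\<in>F. (diameter c / 2) powr real (card E)) \<le> (L * card E) ^ card E * (\<Prod>e\<in>E. hi e - lo e)"
      using S by (simp add: m_def power_mult_distrib)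
  qed
qed


lemma frame_exists:
  fixes d n1 l :: "'a::euclidean_space"
  assumes nd: "norm d = 1" and nn: "norm n1 = 1" and nl: "norm l = 1"
    and o1: "d \<bullet> n1 = 0" and o2: "d \<bullet> l = 0" and o3: "n1 \<bullet> l = 0"
  obtains B where "finite B" "\<forall>e\<in>B. norm e = 1" "pairwise orthogonal B"
    "\<forall>e\<in>B. e \<bullet> d = 0 \<and> e \<bullet> n1 = 0 \<and> e \<bullet> l = 0"
    "card B + 3 = DIM('a)"
    "\<And>w. w = (w \<bullet> d) *\<^sub>R d + (w \<bullet> n1) *\<^sub>R n1 + (w \<bullet> l) *\<^sub>R l + (\<Sum>e\<in>B. (w \<bullet> e) *\<^sub>R e)"
    "\<And>w. (norm w)\<^sup>2 = (w \<bullet> d)\<^sup>2 + (w \<bullet> n1)\<^sup>2 + (w \<bullet> l)\<^sup>2 + (\<Sum>e\<in>B. (w \<bullet> e)\<^sup>2)"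
proof -
  define V where "V = {y. \<forall>x \<in> {d, n1, l}. orthogonal x y}"
  have sV: "subspace V" unfolding V_def by (rule subspace_orthogonal_to_vectors)
  obtain B where B: "B \<subseteq> V" "pairwise orthogonal B" "\<And>x. x \<in> B \<Longrightarrow> norm x = 1"
    "independent B" "card B = dim V" "span B = V"
    using orthonormal_basis_subspace[OF sV] by metis
  have finB: "finite B" using B(4) finiteI_independent by blast
  have Bo: "\<forall>e\<in>B. e \<bullet> d = 0 \<and> e \<bullet> n1 = 0 \<and> e \<bullet> l = 0"
    using B(1) by (auto simp: V_def orthogonal_def inner_commute)
  have dd: "d \<bullet> d = 1" "n1 \<bullet> n1 = 1" "l \<bullet> l = 1" using nd nn nl by (simp_all add: dot_square_norm)
  have exp: "w = (w \<bullet> d) *\<^sub>R d + (w \<bullet> n1) *\<^sub>R n1 + (w \<bullet> l) *\<^sub>R l + (\<Sum>e\<in>B. (w \<bullet> e) *\<^sub>R e)" for w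
  proof -
    define v where "v = w - (w \<bullet> d) *\<^sub>R d - (w \<bullet> n1) *\<^sub>R n1 - (w \<bullet> l) *\<^sub>R l"
    have "v \<in> V" unfolding V_def v_def orthogonal_def
      using o1 o2 o3 dd by (auto simp: inner_diff_right inner_commute)
    then have vs: "v \<in> span B" using B(6) by simp
    have "(\<Sum>e\<in>B. (v \<bullet> e) *\<^sub>R e) = v" by (rule orthonormal_basis_expand[OF B(2) B(3) vs finB])
    moreover have "v \<bullet> e = w \<bullet> e" if "e \<in> B" for e
      using Bo that by (auto simp: v_def inner_diff_left inner_diff_right inner_commute)
    ultimately have "(\<Sum>e\<in>B. (w \<bullet> e) *\<^sub>R e) = v" by (metis (no_types, lifting) sum.cong)
    then show ?thesis by (simp add: v_def)
  qed
  have card: "card B + 3 = DIM('a)"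
  proof -
    define E0 where "E0 = insert d (insert n1 (insert l B))"
    have dist: "d \<noteq> n1" "d \<noteq> l" "n1 \<noteq> l" "d \<notin> B" "n1 \<notin> B" "l \<notin> B"
      using o1 o2 o3 dd Bo by auto
    have po: "pairwise orthogonal E0" unfolding E0_def using B(2) o1 o2 o3 Bo
      by (auto simp: pairwise_insert orthogonal_def inner_commute)
    have z: "0 \<notin> E0" unfolding E0_def using nd nn nl B(3) by (metis insert_iff norm_zero zero_neq_one)
    have ind: "independent E0" by (rule pairwise_orthogonal_independent[OF po z])
    have "span E0 = UNIV"
    proof -
      have "w \<in> span E0" for w
      proof -
        have "(w \<bullet> d) *\<^sub>R d + (w \<bullet> n1) *\<^sub>R n1 + (w \<bullet> l) *\<^sub>R l + (\<Sum>e\<in>B. (w \<bullet> e) *\<^sub>R e) \<in> span E0"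
          unfolding E0_def
          by (intro span_add span_scale span_sum span_base) auto
        then show ?thesis using exp[of w] by simp
      qed
      then show ?thesis by auto
    qed
    then have "card E0 = DIM('a)" using dim_span_eq_card_independent[OF ind] by simp
    moreover have "card E0 = card B + 3" unfolding E0_def using dist finB by simp
    ultimately show ?thesis by simp
  qed
  have pars: "(norm w)\<^sup>2 = (w \<bullet> d)\<^sup>2 + (w \<bullet> n1)\<^sup>2 + (w \<bullet> l)\<^sup>2 + (\<Sum>e\<in>B. (w \<bullet> e)\<^sup>2)" for w
  proof -
    have "(norm w)\<^sup>2 = w \<bullet> w" by (simp add: dot_square_norm)
    also have "\<dots> = w \<bullet> ((w \<bullet> d) *\<^sub>R d + (w \<bullet> n1) *\<^sub>R n1 + (w \<bullet> l) *\<^sub>R l + (\<Sum>e\<in>B. (w \<bullet> e) *\<^sub>R e))"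
      using exp[of w] by simp
    also have "\<dots> = (w \<bullet> d)\<^sup>2 + (w \<bullet> n1)\<^sup>2 + (w \<bullet> l)\<^sup>2 + (\<Sum>e\<in>B. (w \<bullet> e)\<^sup>2)"
      by (simp add: inner_add_right inner_sum_right power2_eq_square)
    finally show ?thesis .
  qed
  show ?thesis by (rule that[OF finB _ B(2) Bo card exp pars]) (use B(3) in auto)
qed


context etaL begin

lemma growth:
  fixes u :: "nat \<Rightarrow> 'a::real_inner \<Rightarrow> real" and N :: "nat \<Rightarrow> 'a"
  assumes pos: "lam0 > 0" "0 < \<gamma>" "\<gamma> \<le> 1" and k1: "k \<ge> 1"
    and Nl: "\<forall>l<k. norm (N l) = 1"
    and ud: "\<forall>l<k. u l x - u l y = N l \<bullet> (x - y)"
    and dd: "\<forall>l\<in>P. l < k \<longrightarrow> N l \<bullet> d \<ge> c"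
    and xy: "x - y = t *\<^sub>R d + w" and t0: "t \<ge> 0"
    and sg: "c * t - norm w > 0"
    and irr: "real k \<le> 2 * g * lam0"
    and px: "\<forall>l\<le>k-1. (l \<in> P \<longrightarrow> \<alpha> \<le> u l x) \<and> (l \<notin> P \<longrightarrow> u l x < \<alpha> - g)"
    and py: "\<forall>l\<le>k-1. (l \<in> P \<longrightarrow> \<alpha> \<le> u l y) \<and> (l \<notin> P \<longrightarrow> u l y < \<alpha> - g)"
    and ex: "\<exists>l\<le>k-1. l \<in> P"
  shows "uhat \<eta> \<gamma> lam0 u (k-1) y + (c * t - norm w) \<le> uhat \<eta> \<gamma> lam0 u (k-1) x"
proof -
  define \<sigma> where "\<sigma> = c * t - norm w"
  define u1 where "u1 l (z::'a) = (if l \<in> P then u l y + \<sigma> else u l x)" for l z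
  define u2 where "u2 l (z::'a) = u l y + \<sigma>" for l z
  have step1: "u1 l x \<le> u l x" if "l \<le> k - 1" for l
  proof (cases "l \<in> P")
    case True
    have lk: "l < k" using that k1 by linarith
    have "N l \<bullet> (x - y) = t * (N l \<bullet> d) + N l \<bullet> w" by (simp add: xy inner_add_right)
    moreover have "t * (N l \<bullet> d) \<ge> t * c" using dd True lk t0 by (simp add: mult_left_mono)
    moreover have "\<bar>N l \<bullet> w\<bar> \<le> norm w"
      using Cauchy_Schwarz_ineq2[of "N l" w] Nl lk by simp
    moreover have "u l x - u l y = N l \<bullet> (x - y)" using ud lk by blast
    ultimately have "u l x - u l y \<ge> \<sigma>" unfolding \<sigma>_def by (simp add: mult.commute)
    then show ?thesis using True by (simp add: u1_def)
  next
    case False then show ?thesis by (simp add: u1_def)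
  qed
  have A: "uhat \<eta> \<gamma> lam0 u1 (k-1) x \<le> uhat \<eta> \<gamma> lam0 u (k-1) x"
    by (rule uhat_mono[OF pos]) (use step1 in auto)
  have sp: "\<sigma> > 0" using sg by (simp add: \<sigma>_def)
  have B: "uhat \<eta> \<gamma> lam0 u1 (k-1) x = uhat \<eta> \<gamma> lam0 u2 (k-1) x"
  proof -
    have irr': "real (k - 1 + 1) \<le> 2 * g * lam0" using irr k1 by simp
    have H: "\<forall>l\<le>k-1. (l \<in> P \<longrightarrow> u1 l x = u2 l x \<and> \<alpha> + \<sigma> \<le> u1 l x) \<and> (l \<notin> P \<longrightarrow> u1 l x \<le> (\<alpha> + \<sigma>) - g \<and> u2 l x \<le> (\<alpha> + \<sigma>) - g)"
      using px py sp by (auto simp: u1_def u2_def)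
    show ?thesis using uhat_irrel[where D=g and \<alpha>="\<alpha> + \<sigma>" and m="k-1" and u=u1 and v=u2 and x=x and y=x and P=P, OF pos irr' H] ex by blast
  qed
  have C: "uhat \<eta> \<gamma> lam0 u2 (k-1) x = uhat \<eta> \<gamma> lam0 u (k-1) y + \<sigma>"
    by (rule uhat_shift) (simp add: u2_def)
  show ?thesis using A B C by (simp add: \<sigma>_def)
qed

lemma bilip_t:
  fixes u :: "nat \<Rightarrow> 'a::real_inner \<Rightarrow> real" and N :: "nat \<Rightarrow> 'a"
  assumes pos: "lam0 > 0" "0 < \<gamma>" "\<gamma> \<le> 1" and k1: "k \<ge> 1"
    and Nl: "\<forall>l<k. norm (N l) = 1"
    and ud: "\<forall>l<k. \<forall>x y. u l x - u l y = N l \<bullet> (x - y)"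
    and dd: "\<forall>l\<in>P. l < k \<longrightarrow> N l \<bullet> d \<ge> c"
    and xy: "x - y = t *\<^sub>R d + w"
    and irr: "real k \<le> 2 * g * lam0"
    and px: "\<forall>l\<le>k-1. (l \<in> P \<longrightarrow> \<alpha> \<le> u l x) \<and> (l \<notin> P \<longrightarrow> u l x < \<alpha> - g)"
    and py: "\<forall>l\<le>k-1. (l \<in> P \<longrightarrow> \<alpha> \<le> u l y) \<and> (l \<notin> P \<longrightarrow> u l y < \<alpha> - g)"
    and ex: "\<exists>l\<le>k-1. l \<in> P"
  shows "c * \<bar>t\<bar> \<le> \<bar>uhat \<eta> \<gamma> lam0 u (k-1) x - uhat \<eta> \<gamma> lam0 u (k-1) y\<bar> + norm w"
proof (cases "t \<ge> 0")
  case True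
  show ?thesis
  proof (cases "c * t - norm w > 0")
    case True
    have "uhat \<eta> \<gamma> lam0 u (k-1) y + (c * t - norm w) \<le> uhat \<eta> \<gamma> lam0 u (k-1) x"
      by (rule growth[OF pos k1 Nl _ dd xy \<open>t \<ge> 0\<close> True irr px py ex]) (use ud in blast)
    then show ?thesis using \<open>t \<ge> 0\<close> by auto
  next
    case False then show ?thesis using \<open>t \<ge> 0\<close> by auto
  qed
next
  case False
  have xy': "y - x = (- t) *\<^sub>R d + (- w)" using xy by (simp add: algebra_simps)
  show ?thesis
  proof (cases "c * (- t) - norm (- w) > 0")
    case True
    have "uhat \<eta> \<gamma> lam0 u (k-1) x + (c * (- t) - norm (- w)) \<le> uhat \<eta> \<gamma> lam0 u (k-1) y"
      by (rule growth[OF pos k1 Nl _ dd xy' _ True irr py px ex]) (use ud False in auto)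
    then show ?thesis using False by auto
  next
    case F2: False then show ?thesis using False by auto
  qed
qed

end


lemma sign_aux:
  fixes a b c q1 q2 q3 :: real
  assumes "a*q1 + b*q2 + c*q3 = 0" "q1 > 0" "q2 \<le> 0" "q3 \<le> 0"
  shows "(a > 0 \<longrightarrow> b > 0 \<or> c > 0) \<and> (a < 0 \<longrightarrow> b < 0 \<or> c < 0)"
proof -
  have "a > 0 \<Longrightarrow> b \<le> 0 \<Longrightarrow> c \<le> 0 \<Longrightarrow> False"
  proof -
    assume h: "a > 0" "b \<le> 0" "c \<le> 0"
    have "a * q1 > 0" using h assms by simp
    moreover have "b * q2 \<ge> 0" using h assms by (simp add: mult_nonpos_nonpos)
    moreover have "c * q3 \<ge> 0" using h assms by (simp add: mult_nonpos_nonpos)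
    ultimately show False using assms(1) by linarith
  qed
  moreover have "a < 0 \<Longrightarrow> b \<ge> 0 \<Longrightarrow> c \<ge> 0 \<Longrightarrow> False"
  proof -
    assume h: "a < 0" "b \<ge> 0" "c \<ge> 0"
    have "a * q1 < 0" using h assms by (simp add: mult_neg_pos)
    moreover have "b * q2 \<le> 0" using h assms by (simp add: mult_nonneg_nonpos)
    moreover have "c * q3 \<le> 0" using h assms by (simp add: mult_nonneg_nonpos)
    ultimately show False using assms(1) by linarith
  qed
  ultimately show ?thesis by force
qed

lemma sign_all:
  fixes a b c p1 p2 p3 :: real
  assumes "a*p1 + b*p2 + c*p3 = 0" "p1 < 0" "p2 < 0" "p3 < 0"
  shows "(a \<ge> 0 \<and> b \<ge> 0 \<and> c \<ge> 0 \<longrightarrow> a = 0 \<and> b = 0 \<and> c = 0) \<and> (a \<le> 0 \<and> b \<le> 0 \<and> c \<le> 0 \<longrightarrow> a = 0 \<and> b = 0 \<and> c = 0)"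
proof (rule conjI; rule impI)
  assume h: "a \<ge> 0 \<and> b \<ge> 0 \<and> c \<ge> 0"
  have "a * p1 \<le> 0" "b * p2 \<le> 0" "c * p3 \<le> 0" using h assms by (simp_all add: mult_nonneg_nonpos)
  then have "a * p1 = 0" "b * p2 = 0" "c * p3 = 0" using assms(1) by linarith+
  then show "a = 0 \<and> b = 0 \<and> c = 0" using assms by simp
next
  assume h: "a \<le> 0 \<and> b \<le> 0 \<and> c \<le> 0"
  have "a * p1 \<ge> 0" "b * p2 \<ge> 0" "c * p3 \<ge> 0" using h assms by (simp_all add: mult_nonpos_nonpos)
  then have "a * p1 = 0" "b * p2 = 0" "c * p3 = 0" using assms(1) by linarith+
  then show "a = 0 \<and> b = 0 \<and> c = 0" using assms by simp
qed

lemma sign_indep: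
  fixes a b c :: real
  assumes "a*p1 + b*p2 + c*p3 = 0" "p1<0" "p2<0" "p3<0"
  "a*q1 + b*q2 + c*q3 = 0" "q1>0" "q2 \<le> 0" "q3 \<le> 0"
  "a*r1 + b*r2 + c*r3 = 0" "r1 \<le> 0" "r2 > 0" "r3 \<le> 0"
  "a * s1 + b * s2 + c * s3 = 0" "s1 \<le> 0" "s2 \<le> 0" "s3 > 0"
  shows "a = 0 \<and> b = 0 \<and> c = 0"
proof -
  have F1: "(a > 0 \<longrightarrow> b > 0 \<or> c > 0) \<and> (a < 0 \<longrightarrow> b < 0 \<or> c < 0)"
    using sign_aux[of a q1 b q2 c q3] assms by simp
  have F2: "(b > 0 \<longrightarrow> a > 0 \<or> c > 0) \<and> (b < 0 \<longrightarrow> a < 0 \<or> c < 0)"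
    using sign_aux[of b r2 a r1 c r3] assms by (simp add: algebra_simps)
  have F3: "(c > 0 \<longrightarrow> a > 0 \<or> b > 0) \<and> (c < 0 \<longrightarrow> a < 0 \<or> b < 0)"
    using sign_aux[of c s3 a s1 b s2] assms by (simp add: algebra_simps)
  have F4: "(a \<ge> 0 \<and> b \<ge> 0 \<and> c \<ge> 0 \<longrightarrow> a = 0 \<and> b = 0 \<and> c = 0) \<and> (a \<le> 0 \<and> b \<le> 0 \<and> c \<le> 0 \<longrightarrow> a = 0 \<and> b = 0 \<and> c = 0)"
    using sign_all[of a p1 b p2 c p3] assms by simp
  show ?thesis using F1 F2 F3 F4 by linarith
qed


lemma compact_neg:
  fixes f :: "'a::metric_space \<Rightarrow> real"
  assumes "compact K" "continuous_on K f" "\<forall>x\<in>K. f x < 0"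
  shows "\<exists>\<tau>>0. \<forall>x\<in>K. f x \<le> - \<tau>"
proof (cases "K = {}")
  case True then show ?thesis by (intro exI[of _ 1]) auto
next
  case False
  obtain z where z: "z \<in> K" "\<forall>x\<in>K. f x \<le> f z"
    using continuous_attains_sup[OF assms(1) False assms(2)] by blast
  show ?thesis using z assms(3) by (intro exI[of _ "- f z"]) auto
qed

lemma cover_union:
  fixes T :: "'j \<Rightarrow> 'a::metric_space set" and f :: "'a set \<Rightarrow> real"
  assumes "finite J" "\<forall>c. f c \<ge> 0"
    and "\<forall>j\<in>J. \<exists>F. finite F \<and> T j \<subseteq> \<Union>F \<and> (\<forall>c\<in>F. bounded c \<and> diameter c \<le> \<delta>) \<and> (\<Sum>c\<in>F. f c) \<le> B j"
  shows "\<exists>F. finite F \<and> (\<Union>j\<in>J. T j) \<subseteq> \<Union>F \<and> (\<forall>c\<in>F. bounded c \<and> diameter c \<le> \<delta>) \<and> (\<Sum>c\<in>F. f c) \<le> (\<Sum>j\<in>J. B j)"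
  using assms(1,3)
proof (induction J rule: finite_induct)
  case empty then show ?case by (intro exI[of _ "{}"]) auto
next
  case (insert j J)
  obtain F1 where F1: "finite F1" "T j \<subseteq> \<Union>F1" "\<forall>c\<in>F1. bounded c \<and> diameter c \<le> \<delta>" "(\<Sum>c\<in>F1. f c) \<le> B j"
    using insert.prems by blast
  obtain F2 where F2: "finite F2" "(\<Union>j\<in>J. T j) \<subseteq> \<Union>F2" "\<forall>c\<in>F2. bounded c \<and> diameter c \<le> \<delta>" "(\<Sum>c\<in>F2. f c) \<le> (\<Sum>j\<in>J. B j)"
    using insert.IH insert.prems by blast
  have "(\<Sum>c\<in>F1 \<union> F2. f c) \<le> (\<Sum>c\<in>F1. f c) + (\<Sum>c\<in>F2. f c)"
  proof -
    have "(\<Sum>c\<in>F1 \<union> F2. f c) + (\<Sum>c\<in>F1 \<inter> F2. f c) = (\<Sum>c\<in>F1. f c) + (\<Sum>c\<in>F2. f c)"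
      by (rule sum.union_inter[OF F1(1) F2(1)])
    moreover have "(\<Sum>c\<in>F1 \<inter> F2. f c) \<ge> 0" using assms(2) by (simp add: sum_nonneg)
    ultimately show ?thesis by linarith
  qed
  then show ?case using F1 F2 insert.hyps
    by (intro exI[of _ "F1 \<union> F2"]) auto
qed


lemma sum_orth_inner:
  fixes B :: "'a::real_inner set"
  assumes "finite B" "pairwise orthogonal B" "\<forall>e\<in>B. norm e = 1" "e \<in> B"
  shows "(\<Sum>e'\<in>B. (f e') *\<^sub>R e') \<bullet> e = f e"
proof -
  have "(\<Sum>e'\<in>B. (f e') *\<^sub>R e') \<bullet> e = (\<Sum>e'\<in>B. f e' * (e' \<bullet> e))" by (simp add: inner_sum_left)
  also have "\<dots> = (\<Sum>e'\<in>B. if e' = e then f e else 0)"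
  proof (rule sum.cong)
    fix e' assume "e' \<in> B"
    then show "f e' * (e' \<bullet> e) = (if e' = e then f e else 0)"
      using assms by (auto simp: pairwise_def orthogonal_def dot_square_norm)
  qed simp
  also have "\<dots> = f e" using assms by simp
  finally show ?thesis .
qed

lemma sum_orth_inner0:
  fixes B :: "'a::real_inner set"
  assumes "\<forall>e'\<in>B. e' \<bullet> e = 0"
  shows "(\<Sum>e'\<in>B. (f e') *\<^sub>R e') \<bullet> e = 0"
  using assms by (simp add: inner_sum_left)

lemma piece_bound:
  fixes u :: "nat \<Rightarrow> 'a::euclidean_space \<Rightarrow> real" and N :: "nat \<Rightarrow> 'a"
  assumes eL: "etaL \<eta>"
    and pos: "lam0 > 0" "0 < \<gamma>" "\<gamma> \<le> 1" and k1: "k \<ge> 1" and kq: "k \<le> q" and dim: "DIM('a) \<ge> 3"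
    and Nl: "\<forall>m\<le>q. norm (N m) = 1" and ud: "\<forall>m\<le>q. \<forall>x y. u m x - u m y = N m \<bullet> (x - y)"
    and dn: "norm d = 1" "N k \<bullet> d = 0" and cpos: "c > 0" and dd: "\<forall>l\<in>P. l < k \<longrightarrow> N l \<bullet> d \<ge> c"
    and ln: "norm lv = 1" "lv \<bullet> d = 0" "lv \<bullet> N k = 0" and Wp: "W > 0"
    and finB: "finite B" and nB: "\<forall>e\<in>B. norm e = 1" and oB: "pairwise orthogonal B"
    and Bo: "\<forall>e\<in>B. e \<bullet> d = 0 \<and> e \<bullet> N k = 0 \<and> e \<bullet> lv = 0" and cB: "card B + 3 = DIM('a)"
    and pars: "\<And>w. (norm w)\<^sup>2 = (w \<bullet> d)\<^sup>2 + (w \<bullet> N k)\<^sup>2 + (w \<bullet> lv)\<^sup>2 + (\<Sum>e\<in>B. (w \<bullet> e)\<^sup>2)"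
    and irr: "real k \<le> 2 * g * lam0"
    and rp: "r > 0" and dp: "\<delta> > 0"
    and Tp: "\<forall>x\<in>T. uhat \<eta> \<gamma> lam0 u k x = 0 \<and> - 2 / lam \<gamma> lam0 k \<le> uhat \<eta> \<gamma> lam0 u (k-1) x
        \<and> uhat \<eta> \<gamma> lam0 u (k-1) x \<le> 0 \<and> - 2 / lam \<gamma> lam0 k \<le> u k x \<and> u k x \<le> 0 \<and> dist p x < r
        \<and> \<bar>lv \<bullet> (x - zz)\<bar> \<le> 12 * W / lam0
        \<and> (\<forall>l\<le>k-1. (l \<in> P \<longrightarrow> \<alpha> \<le> u l x) \<and> (l \<notin> P \<longrightarrow> u l x < \<alpha> - g)) \<and> (\<exists>l\<le>k-1. l \<in> P)"
  shows "\<exists>F. finite F \<and> T \<subseteq> \<Union>F \<and> (\<forall>c\<in>F. bounded c \<and> diameter c \<le> \<delta>)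
     \<and> (\<Sum>c\<in>F. (diameter c / 2) powr (real DIM('a) - 1))
        \<le> ((2 / c + 1) * real (DIM('a) - 1)) ^ (DIM('a) - 1) * (96 * W * 2 ^ (DIM('a) - 3))
           * (1 / lam \<gamma> lam0 k) * (1 / lam0) * r ^ (DIM('a) - 3)"
proof -
  interpret etaL \<eta> by (rule eL)
  define lk where "lk = lam \<gamma> lam0 k"
  have lkp: "lk > 0" using lam_ge[OF pos, of k] pos by (simp add: lk_def)
  have lkg: "lk \<ge> lam0" using lam_ge[OF pos, of k] by (simp add: lk_def)
  have Nk1: "norm (N k) = 1" using Nl kq by simp
  have nk: "N k \<bullet> N k = 1" "lv \<bullet> lv = 1" "d \<bullet> d = 1" using Nk1 ln dn by (simp_all add: dot_square_norm)
  have Nkl: "N k \<bullet> lv = 0" "d \<bullet> N k = 0" "d \<bullet> lv = 0" using ln dn by (simp_all add: inner_commute)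
  have dist1: "N k \<noteq> lv" "N k \<notin> B" "lv \<notin> B" using nk Nkl Bo by auto
  define Pm where "Pm x = (uhat \<eta> \<gamma> lam0 u (k-1) x - u k x) *\<^sub>R N k + (x \<bullet> lv) *\<^sub>R lv + (\<Sum>e\<in>B. (x \<bullet> e) *\<^sub>R e)" for x
  define E where "E = insert (N k) (insert lv B)"
  have BNk: "\<forall>e'\<in>B. e' \<bullet> N k = 0" "\<forall>e'\<in>B. e' \<bullet> lv = 0" "\<forall>e'\<in>B. e' \<bullet> d = 0" using Bo by auto
  have s1: "(\<Sum>e\<in>B. (x \<bullet> e) *\<^sub>R e) \<bullet> d = 0" "(\<Sum>e\<in>B. (x \<bullet> e) *\<^sub>R e) \<bullet> N k = 0"
     "(\<Sum>e\<in>B. (x \<bullet> e) *\<^sub>R e) \<bullet> lv = 0" for x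
    using sum_orth_inner0[OF BNk(3)] sum_orth_inner0[OF BNk(1)] sum_orth_inner0[OF BNk(2)] by blast+
  have ip1: "Pm x \<bullet> d = 0" for x
    unfolding Pm_def inner_add_left inner_scaleR_left using s1[of x] dn ln by simp
  have ip2: "Pm x \<bullet> N k = uhat \<eta> \<gamma> lam0 u (k-1) x - u k x" for x
    unfolding Pm_def inner_add_left inner_scaleR_left using s1[of x] nk ln by simp
  have ip3: "Pm x \<bullet> lv = x \<bullet> lv" for x
    unfolding Pm_def inner_add_left inner_scaleR_left using s1[of x] nk Nkl by simp
  have ip4: "Pm x \<bullet> e = x \<bullet> e" if "e \<in> B" for x e
  proof -
    have "N k \<bullet> e = 0" "lv \<bullet> e = 0" using Bo that by (auto simp: inner_commute)
    then show ?thesis unfolding Pm_def inner_add_left inner_scaleR_left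
      using sum_orth_inner[OF finB oB nB that, of "\<lambda>e. x \<bullet> e"] by simp
  qed
  define L where "L = 2 / c + 1"
  have Lp: "L > 0" using cpos unfolding L_def by (smt (verit) divide_pos_pos)
  have Lip: "\<forall>x\<in>T. \<forall>y\<in>T. dist x y \<le> L * dist (Pm x) (Pm y)"
  proof (intro ballI)
    fix x y assume xT: "x \<in> T" and yT: "y \<in> T"
    define v where "v = x - y"
    define t where "t = v \<bullet> d"
    define w where "w = v - t *\<^sub>R d"
    define a where "a = uhat \<eta> \<gamma> lam0 u (k-1) x"
    define a' where "a' = uhat \<eta> \<gamma> lam0 u (k-1) y"
    define b where "b = u k x"
    define b' where "b' = u k y"
    define D1 where "D1 = (a - b) - (a' - b')"
    define R where "R = (v \<bullet> lv)\<^sup>2 + (\<Sum>e\<in>B. (v \<bullet> e)\<^sup>2)"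
    have kS: "k = Suc (k - 1)" using k1 by simp
    have hx: "smax \<eta> lk a b = 0" using Tp xT uhat_Suc_smax[of \<eta> \<gamma> lam0 u "k-1" x] kS
      by (simp add: a_def b_def lk_def)
    have hy: "smax \<eta> lk a' b' = 0" using Tp yT uhat_Suc_smax[of \<eta> \<gamma> lam0 u "k-1" y] kS
      by (simp add: a'_def b'_def lk_def)
    have opp: "\<bar>a - a'\<bar> \<le> \<bar>D1\<bar> \<and> \<bar>b - b'\<bar> \<le> \<bar>D1\<bar>"
      using smax_eq_opp[OF lkp, of a b a' b'] hx hy by (simp add: D1_def)
    have xy: "v = t *\<^sub>R d + w" by (simp add: w_def)
    have bl: "c * \<bar>t\<bar> \<le> \<bar>a - a'\<bar> + norm w"
      unfolding a_def a'_def
    proof (rule bilip_t[OF pos k1 _ _ dd _ irr])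
      show "\<forall>l<k. norm (N l) = 1" using Nl kq by auto
      show "\<forall>l<k. \<forall>x y. u l x - u l y = N l \<bullet> (x - y)" using ud kq by auto
      show "x - y = t *\<^sub>R d + w" using xy by (simp add: v_def)
      show "\<forall>l\<le>k - 1. (l \<in> P \<longrightarrow> \<alpha> \<le> u l x) \<and> (l \<notin> P \<longrightarrow> u l x < \<alpha> - g)" using Tp xT by blast
      show "\<forall>l\<le>k - 1. (l \<in> P \<longrightarrow> \<alpha> \<le> u l y) \<and> (l \<notin> P \<longrightarrow> u l y < \<alpha> - g)" using Tp yT by blast
      show "\<exists>l\<le>k - 1. l \<in> P" using Tp xT by blast
    qed
    have vNk: "v \<bullet> N k = b - b'" using ud kq by (simp add: v_def b_def b'_def inner_commute)
    have PD: "(norm (Pm x - Pm y))\<^sup>2 = D1\<^sup>2 + R"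
    proof -
      have "(norm (Pm x - Pm y))\<^sup>2 = ((Pm x - Pm y) \<bullet> d)\<^sup>2 + ((Pm x - Pm y) \<bullet> N k)\<^sup>2 + ((Pm x - Pm y) \<bullet> lv)\<^sup>2
          + (\<Sum>e\<in>B. ((Pm x - Pm y) \<bullet> e)\<^sup>2)" by (rule pars)
      also have "\<dots> = D1\<^sup>2 + R"
        unfolding R_def D1_def inner_diff_left ip1 ip2 ip3 a_def a'_def b_def b'_def v_def
        by (simp add: ip4 inner_diff_left)
      finally show ?thesis .
    qed
    have WW: "(norm w)\<^sup>2 = (b - b')\<^sup>2 + R"
    proof -
      have n0: "(norm w)\<^sup>2 = (w \<bullet> d)\<^sup>2 + (w \<bullet> N k)\<^sup>2 + (w \<bullet> lv)\<^sup>2 + (\<Sum>e\<in>B. (w \<bullet> e)\<^sup>2)" by (rule pars)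
      have w1a: "w \<bullet> d = 0" unfolding w_def t_def using nk by (simp add: inner_diff_left)
      have w1b: "w \<bullet> N k = v \<bullet> N k" unfolding w_def t_def using Nkl by (simp add: inner_diff_left)
      have w1c: "w \<bullet> lv = v \<bullet> lv" unfolding w_def t_def using Nkl by (simp add: inner_diff_left)
      have w2: "(\<Sum>e\<in>B. (w \<bullet> e)\<^sup>2) = (\<Sum>e\<in>B. (v \<bullet> e)\<^sup>2)"
      proof (rule sum.cong)
        fix e assume "e \<in> B"
        then have "e \<bullet> d = 0" using Bo by blast
        then have "d \<bullet> e = 0" by (simp only: inner_commute)
        then show "(w \<bullet> e)\<^sup>2 = (v \<bullet> e)\<^sup>2" unfolding w_def by (simp add: inner_diff_left)
      qed simp
      show ?thesis unfolding R_def using n0 w1a w1b w1c w2 vNk by simp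
    qed
    have VV: "(norm v)\<^sup>2 = t\<^sup>2 + (norm w)\<^sup>2"
    proof -
      have "(norm v)\<^sup>2 = (v \<bullet> d)\<^sup>2 + (v \<bullet> N k)\<^sup>2 + (v \<bullet> lv)\<^sup>2 + (\<Sum>e\<in>B. (v \<bullet> e)\<^sup>2)" by (rule pars)
      then show ?thesis using WW vNk by (simp add: R_def t_def)
    qed
    define nP where "nP = norm (Pm x - Pm y)"
    have nP0: "nP \<ge> 0" by (simp add: nP_def)
    have R0: "R \<ge> 0" by (simp add: R_def sum_nonneg)
    have w1: "norm w \<le> nP"
    proof -
      have "(b - b')\<^sup>2 \<le> D1\<^sup>2" using opp by (simp add: abs_le_square_iff)
      then have "(norm w)\<^sup>2 \<le> nP\<^sup>2" using WW PD by (simp add: nP_def)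
      then show ?thesis using nP0 by (simp add: abs_le_square_iff[symmetric])
    qed
    have d1: "\<bar>D1\<bar> \<le> nP"
    proof -
      have "D1\<^sup>2 \<le> nP\<^sup>2" using PD R0 by (simp add: nP_def)
      then show ?thesis using nP0 by (metis abs_le_square_iff abs_of_nonneg)
    qed
    have tb: "c * \<bar>t\<bar> \<le> 2 * nP" using bl opp w1 d1 by linarith
    then have tb': "\<bar>t\<bar> \<le> 2 / c * nP" using cpos by (simp add: field_simps)
    have "norm v \<le> \<bar>t\<bar> + norm w"
    proof -
      have "(norm v)\<^sup>2 \<le> (\<bar>t\<bar> + norm w)\<^sup>2" using VV by (simp add: power2_eq_square algebra_simps)
      then show ?thesis by (rule power2_le_imp_le) simp
    qed
    also have "\<dots> \<le> L * nP" using tb' w1 by (simp add: L_def algebra_simps)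
    finally show "dist x y \<le> L * dist (Pm x) (Pm y)" by (simp add: dist_norm v_def nP_def)
  qed
  define lo where "lo e = (if e = N k then - 2 / lk else if e = lv then lv \<bullet> zz - 12 * W / lam0 else p \<bullet> e - r)" for e
  define hi where "hi e = (if e = N k then 2 / lk else if e = lv then lv \<bullet> zz + 12 * W / lam0 else p \<bullet> e + r)" for e
  have finE: "finite E" using finB by (simp add: E_def)
  have orthE: "pairwise orthogonal E" unfolding E_def using oB Bo Nkl
    by (auto simp: pairwise_insert orthogonal_def inner_commute)
  have normE: "\<forall>e\<in>E. norm e = 1" using nB Nk1 ln by (simp add: E_def)
  have nE: "E \<noteq> {}" by (simp add: E_def)
  have lohi: "\<forall>e\<in>E. lo e < hi e" using lkp Wp pos rp by (auto simp: lo_def hi_def)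
  have img: "\<forall>x\<in>T. Pm x \<in> span E \<and> (\<forall>e\<in>E. lo e \<le> Pm x \<bullet> e \<and> Pm x \<bullet> e \<le> hi e)"
  proof (intro ballI conjI)
    fix x assume xT: "x \<in> T"
    show "Pm x \<in> span E" unfolding Pm_def E_def
      by (intro span_add span_scale span_sum span_base) auto
    fix e assume eE: "e \<in> E"
    have A: "lo e \<le> Pm x \<bullet> e \<and> Pm x \<bullet> e \<le> hi e"
    proof (cases "e = N k")
      case True
      then show ?thesis using Tp xT ip2[of x] by (auto simp: lo_def hi_def lk_def)
    next
      case F1: False
      show ?thesis
      proof (cases "e = lv")
        case True
        have "\<bar>lv \<bullet> (x - zz)\<bar> \<le> 12 * W / lam0" using Tp xT by blast
        then show ?thesis using True F1 ip3[of x] by (auto simp: lo_def hi_def inner_diff_right inner_commute abs_le_iff)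
      next
        case False
        then have eB: "e \<in> B" using eE F1 by (simp add: E_def)
        have "\<bar>(x - p) \<bullet> e\<bar> \<le> norm (x - p)" using Cauchy_Schwarz_ineq2[of "x - p" e] nB eB by simp
        moreover have "norm (x - p) < r"
        proof -
          have "dist p x < r" using Tp xT by blast
          then show ?thesis by (simp add: dist_norm norm_minus_commute)
        qed
        ultimately show ?thesis using False F1 ip4[OF eB, of x] by (auto simp: lo_def hi_def inner_diff_left abs_le_iff)
      qed
    qed
    show "lo e \<le> Pm x \<bullet> e" using A by simp
    show "Pm x \<bullet> e \<le> hi e" using A by simp
  qed
  obtain F where F: "finite F" "T \<subseteq> \<Union>F" "\<forall>c\<in>F. bounded c \<and> diameter c \<le> \<delta>"
    "(\<Sum>c\<in>F. (diameter c / 2) powr real (card E)) \<le> (L * card E) ^ card E * (\<Prod>e\<in>E. hi e - lo e)"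
    using grid_cover[OF finE orthE normE nE lohi Lp Lip img dp] by blast
  have cE: "card E = DIM('a) - 1" using cB dist1 finB by (simp add: E_def)
  have rcE: "real (card E) = real DIM('a) - 1" using cE dim by simp
  have prodE: "(\<Prod>e\<in>E. hi e - lo e) = (4 / lk) * (24 * W / lam0) * (2 * r) ^ (DIM('a) - 3)"
  proof -
    have "(\<Prod>e\<in>B. hi e - lo e) = (\<Prod>e\<in>B. 2 * r)"
      by (rule prod.cong) (use dist1 in \<open>auto simp: lo_def hi_def\<close>)
    also have "\<dots> = (2 * r) ^ (DIM('a) - 3)"
    proof -
      have "card B = DIM('a) - 3" using cB by linarith
      then show ?thesis by simp
    qed
    finally have PB: "(\<Prod>e\<in>B. hi e - lo e) = (2 * r) ^ (DIM('a) - 3)" .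
    have "(\<Prod>e\<in>E. hi e - lo e) = (hi (N k) - lo (N k)) * ((hi lv - lo lv) * (\<Prod>e\<in>B. hi e - lo e))"
      unfolding E_def using finB dist1 by simp
    also have "\<dots> = (4 / lk) * (24 * W / lam0) * (2 * r) ^ (DIM('a) - 3)"
      unfolding PB using dist1 by (simp add: lo_def hi_def)
    finally show ?thesis .
  qed
  have "(L * card E) ^ card E * (\<Prod>e\<in>E. hi e - lo e)
      = ((2 / c + 1) * real (DIM('a) - 1)) ^ (DIM('a) - 1) * (96 * W * 2 ^ (DIM('a) - 3))
           * (1 / lam \<gamma> lam0 k) * (1 / lam0) * r ^ (DIM('a) - 3)"
    unfolding prodE cE L_def lk_def[symmetric] by (simp add: power_mult_distrib field_simps)
  then show ?thesis using F rcE by (intro exI[of _ F]) auto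
qed


lemma ell_exists:
  fixes N :: "nat \<Rightarrow> 'a::euclidean_space" and u :: "nat \<Rightarrow> 'a \<Rightarrow> real"
  assumes indep: "\<forall>a b c. a *\<^sub>R N i + b *\<^sub>R N j + c *\<^sub>R N k = 0 \<longrightarrow> a = 0 \<and> b = 0 \<and> c = 0"
    and Nk: "norm (N k) = 1" and dk: "N k \<bullet> d = 0"
    and uz: "\<forall>m\<in>{i,j,k}. \<forall>x. u m x = N m \<bullet> (x - z0)"
  shows "\<exists>lv W. norm lv = 1 \<and> lv \<bullet> d = 0 \<and> lv \<bullet> N k = 0 \<and> W > 0 \<and>
          (\<forall>x. \<bar>lv \<bullet> (x - z0)\<bar> \<le> W * (\<bar>u i x\<bar> + \<bar>u j x\<bar> + \<bar>u k x\<bar>))"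
proof -
  have kk: "N k \<bullet> N k = 1" using Nk by (simp add: dot_square_norm)
  have dk': "d \<bullet> N k = 0" using dk by (simp add: inner_commute)
  have "\<exists>a b c. (a \<noteq> 0 \<or> b \<noteq> 0) \<and> (a *\<^sub>R N i + b *\<^sub>R N j + c *\<^sub>R N k) \<bullet> d = 0
          \<and> (a *\<^sub>R N i + b *\<^sub>R N j + c *\<^sub>R N k) \<bullet> N k = 0"
  proof (cases "N i \<bullet> d = 0 \<and> N j \<bullet> d = 0")
    case True
    show ?thesis
      by (rule exI[of _ 1], rule exI[of _ 0], rule exI[of _ "- (N i \<bullet> N k)"])
         (use True kk dk in \<open>simp add: inner_add_left inner_diff_left\<close>)
  next
    case False
    define a where "a = N j \<bullet> d"
    define b where "b = - (N i \<bullet> d)"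
    define c where "c = - (N j \<bullet> d) * (N i \<bullet> N k) + (N i \<bullet> d) * (N j \<bullet> N k)"
    have ab: "a \<noteq> 0 \<or> b \<noteq> 0" using False by (auto simp: a_def b_def)
    have e1: "(a *\<^sub>R N i + b *\<^sub>R N j + c *\<^sub>R N k) \<bullet> d = a * (N i \<bullet> d) + b * (N j \<bullet> d) + c * (N k \<bullet> d)"
      by (simp add: inner_add_left)
    have e2: "(a *\<^sub>R N i + b *\<^sub>R N j + c *\<^sub>R N k) \<bullet> N k = a * (N i \<bullet> N k) + b * (N j \<bullet> N k) + c * (N k \<bullet> N k)"
      by (simp add: inner_add_left)
    have z1: "a * (N i \<bullet> d) + b * (N j \<bullet> d) + c * (N k \<bullet> d) = 0"
      using dk by (simp add: a_def b_def)
    have z2: "a * (N i \<bullet> N k) + b * (N j \<bullet> N k) + c * (N k \<bullet> N k) = 0"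
      unfolding kk by (simp add: a_def b_def c_def)
    show ?thesis using ab e1 e2 z1 z2 by metis
  qed
  then obtain a b c where abc: "a \<noteq> 0 \<or> b \<noteq> 0" "(a *\<^sub>R N i + b *\<^sub>R N j + c *\<^sub>R N k) \<bullet> d = 0"
      "(a *\<^sub>R N i + b *\<^sub>R N j + c *\<^sub>R N k) \<bullet> N k = 0" by blast
  define l0 where "l0 = a *\<^sub>R N i + b *\<^sub>R N j + c *\<^sub>R N k"
  have l0nz: "l0 \<noteq> 0" using indep abc(1) by (auto simp: l0_def)
  define nl where "nl = norm l0"
  have nlp: "nl > 0" using l0nz by (simp add: nl_def)
  define lv where "lv = l0 /\<^sub>R nl"
  define W where "W = (\<bar>a\<bar> + \<bar>b\<bar> + \<bar>c\<bar>) / nl + 1"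
  have Wp: "W > 0" using nlp by (simp add: W_def add_nonneg_pos)
  have key: "\<bar>lv \<bullet> (x - z0)\<bar> \<le> W * (\<bar>u i x\<bar> + \<bar>u j x\<bar> + \<bar>u k x\<bar>)" for x
  proof -
    have ui: "u i x = N i \<bullet> (x - z0)" "u j x = N j \<bullet> (x - z0)" "u k x = N k \<bullet> (x - z0)"
      using bspec[OF uz, of i] bspec[OF uz, of j] bspec[OF uz, of k] by simp_all
    have "l0 \<bullet> (x - z0) = a * (N i \<bullet> (x - z0)) + b * (N j \<bullet> (x - z0)) + c * (N k \<bullet> (x - z0))"
      unfolding l0_def by (simp only: inner_add_left inner_scaleR_left)
    then have "l0 \<bullet> (x - z0) = a * u i x + b * u j x + c * u k x"
      by (simp only: ui)
    then have e: "lv \<bullet> (x - z0) = (a * u i x + b * u j x + c * u k x) / nl"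
      by (simp add: lv_def divide_inverse mult.commute)
    have "\<bar>a * u i x + b * u j x + c * u k x\<bar> \<le> \<bar>a\<bar> * \<bar>u i x\<bar> + \<bar>b\<bar> * \<bar>u j x\<bar> + \<bar>c\<bar> * \<bar>u k x\<bar>"
    proof -
      have "\<bar>a * u i x + b * u j x + c * u k x\<bar> \<le> \<bar>a * u i x + b * u j x\<bar> + \<bar>c * u k x\<bar>"
        by (rule abs_triangle_ineq)
      moreover have "\<bar>a * u i x + b * u j x\<bar> \<le> \<bar>a * u i x\<bar> + \<bar>b * u j x\<bar>" by (rule abs_triangle_ineq)
      ultimately show ?thesis by (simp add: abs_mult)
    qed
    also have "\<dots> \<le> (\<bar>a\<bar> + \<bar>b\<bar> + \<bar>c\<bar>) * (\<bar>u i x\<bar> + \<bar>u j x\<bar> + \<bar>u k x\<bar>)"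
      by (simp add: algebra_simps add_increasing mult_nonneg_nonneg)
    finally have "\<bar>lv \<bullet> (x - z0)\<bar> \<le> (\<bar>a\<bar> + \<bar>b\<bar> + \<bar>c\<bar>) / nl * (\<bar>u i x\<bar> + \<bar>u j x\<bar> + \<bar>u k x\<bar>)"
      using nlp by (simp add: e field_simps)
    also have "\<dots> \<le> W * (\<bar>u i x\<bar> + \<bar>u j x\<bar> + \<bar>u k x\<bar>)"
      by (intro mult_right_mono) (auto simp: W_def)
    finally show ?thesis .
  qed
  have n1: "norm lv = 1" using nlp by (simp add: lv_def nl_def)
  have n2: "lv \<bullet> d = 0" using abc(2) by (simp add: lv_def l0_def)
  have n3: "lv \<bullet> N k = 0" using abc(3) by (simp add: lv_def l0_def)
  show ?thesis using n1 n2 n3 Wp key by blast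
qed


lemma pigeon:
  fixes g :: real and v :: "nat \<Rightarrow> real"
  assumes gp: "g > 0"
  shows "\<exists>s\<le>q+1. \<forall>m\<le>q. \<not> (- (2 * real s + 2) * g \<le> v m \<and> v m < - (2 * real s + 1) * g)"
proof (rule ccontr)
  assume "\<not> ?thesis"
  then have H: "\<forall>s\<le>q+1. \<exists>m\<le>q. - (2 * real s + 2) * g \<le> v m \<and> v m < - (2 * real s + 1) * g" by blast
  define f where "f m = nat \<lfloor>(- v m / g - 1) / 2\<rfloor>" for m
  have "{0..q+1} \<subseteq> f ` {0..q}"
  proof
    fix s assume "s \<in> {0..q+1}"
    then obtain m where m: "m \<le> q" "- (2 * real s + 2) * g \<le> v m" "v m < - (2 * real s + 1) * g"
      using H by auto
    have a: "2 * real s + 1 < - v m / g" using m(3) gp by (simp add: field_simps)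
    have b: "- v m / g \<le> 2 * real s + 2" using m(2) gp by (simp add: field_simps)
    have "\<lfloor>(- v m / g - 1) / 2\<rfloor> = int s"
      using a b by (subst floor_eq_iff) auto
    then have "f m = s" by (simp add: f_def)
    then show "s \<in> f ` {0..q}" using m(1) by force
  qed
  then have "card {0..q+1} \<le> card (f ` {0..q})" by (intro card_mono) auto
  also have "\<dots> \<le> card {0..q}" by (rule card_image_le) simp
  finally show False by simp
qed


theorem lemma2p13:
  fixes u :: "nat \<Rightarrow> 'a::euclidean_space \<Rightarrow> real"
    and N :: "nat \<Rightarrow> 'a"
    and q i j k :: nat
    and \<eta> :: "real \<Rightarrow> real"
    and \<Omega> :: "'a set"
  assumes dim: "DIM('a) \<ge> 3"
    and affine: "\<forall>m\<le>q. \<exists>c. \<forall>x. u m x = N m \<bullet> x + c"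
    and unit: "\<forall>m\<le>q. norm (N m) = 1"
    and Omega_def: "\<Omega> = (\<Inter>m\<in>{0..q}. {x. u m x \<le> 0})"
    and compact: "compact \<Omega>"
    and interior: "interior \<Omega> \<noteq> {}"
    and cond_a: "\<forall>l\<le>q. \<exists>x. u l x > 0 \<and> (\<forall>m\<le>q. m \<noteq> l \<longrightarrow> u m x \<le> 0)"
    and cond_c: "\<forall>a b. a < b \<and> b \<le> q \<and> (\<exists>x\<in>\<Omega>. u a x = 0 \<and> u b x = 0) \<longrightarrow> N a \<bullet> N b \<le> 0"
    and eta_smooth: "\<forall>m x. ((deriv ^^ m) \<eta> has_real_derivative (deriv ^^ Suc m) \<eta> x) (at x)"
    and eta_even: "\<forall>t. \<eta> (- t) = \<eta> t"
    and eta_abs: "\<forall>t. \<bar>t\<bar> \<ge> 1/2 \<longrightarrow> \<eta> t = \<bar>t\<bar>"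
    and eta_convex: "\<forall>t. (deriv ^^ 2) \<eta> t \<ge> 0"
    and idx: "i \<le> q" "j \<le> q" "k \<le> q" "i \<noteq> j" "j \<noteq> k" "i \<noteq> k" "k \<ge> 1"
  shows "\<exists>C::real. \<forall>\<gamma>. 0 < \<gamma> \<and> \<gamma> < 1/2 \<longrightarrow>
           (\<exists>lbar. \<forall>lam0 \<ge> lbar. \<forall>p r. 1 / lam0 \<le> r \<and> r \<le> 1 \<longrightarrow>
              hausdorff_measure (real (DIM('a)) - 1)
                (\<Omega> \<inter> {x. uhat \<eta> \<gamma> lam0 u k x = 0}
                   \<inter> {x. - 2 / lam \<gamma> lam0 k \<le> uhat \<eta> \<gamma> lam0 u (k - 1) x \<and> uhat \<eta> \<gamma> lam0 u (k - 1) x \<le> 0}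
                   \<inter> {x. - 2 / lam \<gamma> lam0 k \<le> u k x \<and> u k x \<le> 0}
                   \<inter> {x. - 4 / lam0 \<le> u j x \<and> u j x \<le> 0}
                   \<inter> {x. - 6 / lam0 \<le> u i x \<and> u i x \<le> 0}
                   \<inter> ball p r)
              \<le> ennreal (C * (1 / lam \<gamma> lam0 k) * (1 / lam0) * r ^ (DIM('a) - 3)))"
proof -
  define n where "n = DIM('a)"
  have lip\<eta>: "\<And>x y. \<bar>\<eta> x - \<eta> y\<bar> \<le> \<bar>x - y\<bar>" using eta_facts[OF eta_smooth eta_abs eta_convex] by blast
  have eL: "etaL \<eta>" by unfold_locales (use lip\<eta> eta_abs in auto)
  from affine have "\<forall>m. \<exists>c. m \<le> q \<longrightarrow> (\<forall>x. u m x = N m \<bullet> x + c)" by blast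
  then obtain cc where cc: "\<forall>m. m \<le> q \<longrightarrow> (\<forall>x. u m x = N m \<bullet> x + cc m)" by (metis choice)
  have ud: "\<forall>m\<le>q. \<forall>x y. u m x - u m y = N m \<bullet> (x - y)" using cc by (simp add: inner_diff_right)
  have Om: "x \<in> \<Omega> \<longleftrightarrow> (\<forall>m\<le>q. u m x \<le> 0)" for x using Omega_def by auto
  have NN: "N m \<bullet> N m = 1" if "m \<le> q" for m using unit that by (simp add: dot_square_norm)
  have ucont: "continuous_on A (u m)" if "m \<le> q" for m A
  proof -
    have "u m = (\<lambda>x. N m \<bullet> x + cc m)" using cc that by auto
    then show ?thesis by (simp add: continuous_on_add continuous_on_inner continuous_on_const continuous_on_id)
  qed
  obtain x0 where x0: "\<forall>m\<le>q. u m x0 < 0"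
  proof -
    obtain y where "y \<in> interior \<Omega>" using interior by blast
    then obtain e where e: "e > 0" "ball y e \<subseteq> \<Omega>" by (meson mem_interior)
    have "u m y < 0" if "m \<le> q" for m
    proof -
      have "y + (e/2) *\<^sub>R N m \<in> ball y e" using e unit that by (simp add: dist_norm)
      then have "u m (y + (e/2) *\<^sub>R N m) \<le> 0" using e Om that by blast
      moreover have "u m (y + (e/2) *\<^sub>R N m) - u m y = e / 2" using ud NN that by simp
      ultimately show ?thesis using e by linarith
    qed
    then show ?thesis using that by blast
  qed
  define \<beta> where "\<beta> = Min ((\<lambda>m. - u m x0) ` {0..q})"
  have \<beta>: "\<beta> > 0" "\<forall>m\<le>q. u m x0 \<le> - \<beta>"
  proof -
    show "\<beta> > 0" unfolding \<beta>_def using x0 by (subst Min_gr_iff) auto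
    show "\<forall>m\<le>q. u m x0 \<le> - \<beta>"
    proof (intro allI impI)
      fix m assume "m \<le> q"
      then have "\<beta> \<le> - u m x0" unfolding \<beta>_def by (intro Min_le) auto
      then show "u m x0 \<le> - \<beta>" by linarith
    qed
  qed
  have "\<forall>m. \<exists>\<tau>>0. (m < k \<and> N m \<bullet> N k > 0 \<longrightarrow> (\<forall>x\<in>\<Omega>. min (u m x) (u k x) \<le> - \<tau>))"
  proof
    fix m
    show "\<exists>\<tau>>0. (m < k \<and> N m \<bullet> N k > 0 \<longrightarrow> (\<forall>x\<in>\<Omega>. min (u m x) (u k x) \<le> - \<tau>))"
    proof (cases "m < k \<and> N m \<bullet> N k > 0")
      case True
      have mq: "m \<le> q" using True idx by linarith
      have neg: "\<forall>x\<in>\<Omega>. min (u m x) (u k x) < 0"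
      proof
        fix x assume xO: "x \<in> \<Omega>"
        have le: "u m x \<le> 0" "u k x \<le> 0" using xO Om mq idx by auto
        have "\<not> (u m x = 0 \<and> u k x = 0)" using cond_c True idx xO by force
        then show "min (u m x) (u k x) < 0" using le by linarith
      qed
      have "continuous_on \<Omega> (\<lambda>x. min (u m x) (u k x))"
        using ucont[OF mq] ucont[OF idx(3)] by (intro continuous_on_min) auto
      then obtain \<tau> where "\<tau> > 0" "\<forall>x\<in>\<Omega>. min (u m x) (u k x) \<le> - \<tau>"
        using compact_neg[OF compact _ neg] by blast
      then show ?thesis by blast
    next
      case False then show ?thesis by (intro exI[of _ 1]) auto
    qed
  qed
  then obtain \<tau>f where \<tau>f: "\<forall>m. \<tau>f m > 0 \<and> (m < k \<and> N m \<bullet> N k > 0 \<longrightarrow> (\<forall>x\<in>\<Omega>. min (u m x) (u k x) \<le> - \<tau>f m))"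
    by (metis choice)
  define \<tau>1 where "\<tau>1 = Min (\<tau>f ` {..<k})"
  have \<tau>1: "\<tau>1 > 0" "\<forall>m<k. N m \<bullet> N k > 0 \<longrightarrow> (\<forall>x\<in>\<Omega>. min (u m x) (u k x) \<le> - \<tau>1)"
  proof -
    have "0 \<in> {..<k}" using idx(7) by simp
    then have ne: "{..<k} \<noteq> {}" by blast
    show "\<tau>1 > 0" unfolding \<tau>1_def using \<tau>f ne by (subst Min_gr_iff) auto
    show "\<forall>m<k. N m \<bullet> N k > 0 \<longrightarrow> (\<forall>x\<in>\<Omega>. min (u m x) (u k x) \<le> - \<tau>1)"
    proof (intro allI impI ballI)
      fix m x assume "m < k" "N m \<bullet> N k > 0" "x \<in> \<Omega>"
      then have "min (u m x) (u k x) \<le> - \<tau>f m" using \<tau>f by blast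
      moreover have "\<tau>1 \<le> \<tau>f m" unfolding \<tau>1_def using \<open>m < k\<close> by (intro Min_le) auto
      ultimately show "min (u m x) (u k x) \<le> - \<tau>1" by linarith
    qed
  qed
  have lamge: "lam \<gamma> lam0 k \<ge> lam0" if "lam0 > 0" "0 < \<gamma>" "\<gamma> < 1/2" for \<gamma> lam0
    using etaL.lam_ge[OF eL, of lam0 \<gamma> k] that by simp
  show ?thesis
  proof (cases "\<exists>z0\<in>\<Omega>. u i z0 = 0 \<and> u j z0 = 0 \<and> u k z0 = 0")
    case False
    have neg: "\<forall>x\<in>\<Omega>. min (u i x) (min (u j x) (u k x)) < 0"
    proof
      fix x assume xO: "x \<in> \<Omega>"
      have le: "u i x \<le> 0" "u j x \<le> 0" "u k x \<le> 0" using xO Om idx by auto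
      then show "min (u i x) (min (u j x) (u k x)) < 0" using False xO by force
    qed
    have "continuous_on \<Omega> (\<lambda>x. min (u i x) (min (u j x) (u k x)))"
      using ucont[OF idx(1)] ucont[OF idx(2)] ucont[OF idx(3)] by (intro continuous_on_min) auto
    then obtain \<tau>F where \<tau>F: "\<tau>F > 0" "\<forall>x\<in>\<Omega>. min (u i x) (min (u j x) (u k x)) \<le> - \<tau>F"
      using compact_neg[OF compact _ neg] by blast
    show ?thesis
    proof (rule exI[of _ 0], intro allI impI)
      fix \<gamma> :: real assume \<gamma>: "0 < \<gamma> \<and> \<gamma> < 1/2"
      show "\<exists>lbar. \<forall>lam0 \<ge> lbar. \<forall>p r. 1 / lam0 \<le> r \<and> r \<le> 1 \<longrightarrow>
              hausdorff_measure (real (DIM('a)) - 1)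
                (\<Omega> \<inter> {x. uhat \<eta> \<gamma> lam0 u k x = 0}
                   \<inter> {x. - 2 / lam \<gamma> lam0 k \<le> uhat \<eta> \<gamma> lam0 u (k - 1) x \<and> uhat \<eta> \<gamma> lam0 u (k - 1) x \<le> 0}
                   \<inter> {x. - 2 / lam \<gamma> lam0 k \<le> u k x \<and> u k x \<le> 0}
                   \<inter> {x. - 4 / lam0 \<le> u j x \<and> u j x \<le> 0}
                   \<inter> {x. - 6 / lam0 \<le> u i x \<and> u i x \<le> 0}
                   \<inter> ball p r)
              \<le> ennreal (0 * (1 / lam \<gamma> lam0 k) * (1 / lam0) * r ^ (DIM('a) - 3))"
      proof (intro exI[of _ "7 / \<tau>F"] allI impI)
        fix lam0 :: real and p :: 'a and r :: real assume l0: "7 / \<tau>F \<le> lam0" and "1 / lam0 \<le> r \<and> r \<le> 1"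
        have l0p: "lam0 > 0" using l0 \<tau>F by (smt (verit) divide_pos_pos)
        have sm: "6 / lam0 < \<tau>F"
        proof -
          have "7 \<le> \<tau>F * lam0" using l0 \<tau>F by (simp add: field_simps)
          then show ?thesis using l0p by (simp add: field_simps)
        qed
        have lk: "lam \<gamma> lam0 k \<ge> lam0" using lamge[OF l0p] \<gamma> by blast
        have lkp: "lam \<gamma> lam0 k > 0" using lk l0p by linarith
        have "2 / lam \<gamma> lam0 k \<le> 2 / lam0" using lk l0p by (simp add: frac_le)
        have "4 / lam0 \<le> 6 / lam0" "2 / lam0 \<le> 6 / lam0" using l0p by (simp_all add: frac_le)
        have E: "(\<Omega> \<inter> {x. uhat \<eta> \<gamma> lam0 u k x = 0}
                   \<inter> {x. - 2 / lam \<gamma> lam0 k \<le> uhat \<eta> \<gamma> lam0 u (k - 1) x \<and> uhat \<eta> \<gamma> lam0 u (k - 1) x \<le> 0}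
                   \<inter> {x. - 2 / lam \<gamma> lam0 k \<le> u k x \<and> u k x \<le> 0}
                   \<inter> {x. - 4 / lam0 \<le> u j x \<and> u j x \<le> 0}
                   \<inter> {x. - 6 / lam0 \<le> u i x \<and> u i x \<le> 0}
                   \<inter> ball p r) = {}"
        proof (rule equals0I)
          fix x assume "x \<in> (\<Omega> \<inter> {x. uhat \<eta> \<gamma> lam0 u k x = 0}
                   \<inter> {x. - 2 / lam \<gamma> lam0 k \<le> uhat \<eta> \<gamma> lam0 u (k - 1) x \<and> uhat \<eta> \<gamma> lam0 u (k - 1) x \<le> 0}
                   \<inter> {x. - 2 / lam \<gamma> lam0 k \<le> u k x \<and> u k x \<le> 0}
                   \<inter> {x. - 4 / lam0 \<le> u j x \<and> u j x \<le> 0}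
                   \<inter> {x. - 6 / lam0 \<le> u i x \<and> u i x \<le> 0}
                   \<inter> ball p r)"
          then have xs: "x \<in> \<Omega>" "- 2 / lam \<gamma> lam0 k \<le> u k x" "- 4 / lam0 \<le> u j x" "- 6 / lam0 \<le> u i x"
            by blast+
          have "min (u i x) (min (u j x) (u k x)) \<le> - \<tau>F" using \<tau>F(2) xs(1) by blast
          moreover have "- 2 / lam \<gamma> lam0 k \<ge> - 2 / lam0" using \<open>2 / lam \<gamma> lam0 k \<le> 2 / lam0\<close> by simp
          ultimately show False using xs sm \<open>4 / lam0 \<le> 6 / lam0\<close> \<open>2 / lam0 \<le> 6 / lam0\<close> by linarith
        qed
        have "hausdorff_measure (real (DIM('a)) - 1) {} \<le> ennreal (hausdorff_const (real (DIM('a)) - 1) * 0)"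
        proof (rule hm_le)
          show "0 < real DIM('a) - 1" using dim by simp
          show "\<forall>\<delta>>0. \<exists>F. finite F \<and> {} \<subseteq> \<Union> F \<and> (\<forall>c\<in>F. bounded c \<and> diameter c \<le> \<delta>) \<and> (\<Sum>c\<in>F. (diameter c / 2) powr (real DIM('a) - 1)) \<le> 0"
            by (intro allI impI exI[of _ "{}"]) simp
        qed
        then show "hausdorff_measure (real (DIM('a)) - 1)
                (\<Omega> \<inter> {x. uhat \<eta> \<gamma> lam0 u k x = 0}
                   \<inter> {x. - 2 / lam \<gamma> lam0 k \<le> uhat \<eta> \<gamma> lam0 u (k - 1) x \<and> uhat \<eta> \<gamma> lam0 u (k - 1) x \<le> 0}
                   \<inter> {x. - 2 / lam \<gamma> lam0 k \<le> u k x \<and> u k x \<le> 0}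
                   \<inter> {x. - 4 / lam0 \<le> u j x \<and> u j x \<le> 0}
                   \<inter> {x. - 6 / lam0 \<le> u i x \<and> u i x \<le> 0}
                   \<inter> ball p r)
              \<le> ennreal (0 * (1 / lam \<gamma> lam0 k) * (1 / lam0) * r ^ (DIM('a) - 3))"
          unfolding E by simp
      qed
    qed
  next
    case True
    then obtain z0 where z0: "z0 \<in> \<Omega>" "u i z0 = 0" "u j z0 = 0" "u k z0 = 0" by blast
    have uz: "\<forall>m\<in>{i,j,k}. \<forall>x. u m x = N m \<bullet> (x - z0)"
    proof (intro ballI allI)
      fix m x assume m: "m \<in> {i,j,k}"
      then have "u m x - u m z0 = N m \<bullet> (x - z0)" using ud idx by auto
      moreover have "u m z0 = 0" using m z0 by auto
      ultimately show "u m x = N m \<bullet> (x - z0)" by simp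
    qed
    have indep: "\<forall>a b c. a *\<^sub>R N i + b *\<^sub>R N j + c *\<^sub>R N k = 0 \<longrightarrow> a = 0 \<and> b = 0 \<and> c = 0"
    proof (intro allI impI)
      fix a b c :: real assume H: "a *\<^sub>R N i + b *\<^sub>R N j + c *\<^sub>R N k = 0"
      have lin: "a * u i x + b * u j x + c * u k x = 0" for x
      proof -
        have "a * u i x + b * u j x + c * u k x = (a *\<^sub>R N i + b *\<^sub>R N j + c *\<^sub>R N k) \<bullet> (x - z0)"
          using uz by (simp add: inner_add_left)
        then show ?thesis using H by simp
      qed
      obtain xi where xi: "u i xi > 0" "u j xi \<le> 0" "u k xi \<le> 0" using cond_a idx by metis
      obtain xj where xj: "u j xj > 0" "u i xj \<le> 0" "u k xj \<le> 0" using cond_a idx by metis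
      obtain xk where xk: "u k xk > 0" "u i xk \<le> 0" "u j xk \<le> 0" using cond_a idx by metis
      show "a = 0 \<and> b = 0 \<and> c = 0"
        by (rule sign_indep[OF lin[of x0] _ _ _ lin[of xi] _ _ _ lin[of xj] _ _ _ lin[of xk]])
           (use x0 idx xi xj xk in auto)
    qed
    have "\<forall>d. \<exists>lv W. N k \<bullet> d = 0 \<longrightarrow> (norm lv = 1 \<and> lv \<bullet> d = 0 \<and> lv \<bullet> N k = 0 \<and> W > 0 \<and>
          (\<forall>x. \<bar>lv \<bullet> (x - z0)\<bar> \<le> W * (\<bar>u i x\<bar> + \<bar>u j x\<bar> + \<bar>u k x\<bar>)))"
      using ell_exists[OF indep _ _ uz] unit idx by blast
    then obtain ellf Wf where ell: "\<forall>d. N k \<bullet> d = 0 \<longrightarrow> (norm (ellf d) = 1 \<and> ellf d \<bullet> d = 0 \<and> ellf d \<bullet> N k = 0 \<and> Wf d > 0 \<and>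
          (\<forall>x. \<bar>ellf d \<bullet> (x - z0)\<bar> \<le> Wf d * (\<bar>u i x\<bar> + \<bar>u j x\<bar> + \<bar>u k x\<bar>)))"
      by metis
    define Phi where "Phi d lv B \<longleftrightarrow> (finite B \<and> (\<forall>e\<in>B. norm e = 1) \<and> pairwise orthogonal B \<and> (\<forall>e\<in>B. e \<bullet> d = 0 \<and> e \<bullet> N k = 0 \<and> e \<bullet> lv = 0)
         \<and> card B + 3 = DIM('a) \<and> (\<forall>w. (norm w)\<^sup>2 = (w \<bullet> d)\<^sup>2 + (w \<bullet> N k)\<^sup>2 + (w \<bullet> lv)\<^sup>2 + (\<Sum>e\<in>B. (w \<bullet> e)\<^sup>2)))" for d lv B
    define Bf where "Bf d lv = (SOME B. Phi d lv B)" for d lv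
    have Bf: "Phi d lv (Bf d lv)" if hyp: "norm d = 1" "N k \<bullet> d = 0" "norm lv = 1" "lv \<bullet> d = 0" "lv \<bullet> N k = 0" for d lv
    proof -
      have h: "norm d = 1" "norm (N k) = 1" "norm lv = 1" "d \<bullet> N k = 0" "d \<bullet> lv = 0" "N k \<bullet> lv = 0"
        using hyp unit idx by (auto simp: inner_commute)
      obtain B where "finite B" "\<forall>e\<in>B. norm e = 1" "pairwise orthogonal B"
          "\<forall>e\<in>B. e \<bullet> d = 0 \<and> e \<bullet> N k = 0 \<and> e \<bullet> lv = 0" "card B + 3 = DIM('a)"
          "\<And>w. w = (w \<bullet> d) *\<^sub>R d + (w \<bullet> N k) *\<^sub>R N k + (w \<bullet> lv) *\<^sub>R lv + (\<Sum>e\<in>B. (w \<bullet> e) *\<^sub>R e)"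
          "\<And>w. (norm w)\<^sup>2 = (w \<bullet> d)\<^sup>2 + (w \<bullet> N k)\<^sup>2 + (w \<bullet> lv)\<^sup>2 + (\<Sum>e\<in>B. (w \<bullet> e)\<^sup>2)"
          by (rule frame_exists[OF h]) (rule that; assumption)
      then have "Phi d lv B" unfolding Phi_def by blast
      then show ?thesis unfolding Bf_def by (rule someI)
    qed
    define feas where "feas P \<longleftrightarrow> (\<exists>d. N k \<bullet> d = 0 \<and> norm d = 1 \<and> (\<forall>m\<in>P. m < k \<longrightarrow> N m \<bullet> d > 0))" for P :: "nat set"
    define dP where "dP P = (SOME d. N k \<bullet> d = 0 \<and> norm d = 1 \<and> (\<forall>m\<in>P. m < k \<longrightarrow> N m \<bullet> d > 0))" for P :: "nat set"
    define cP where "cP P = Min (insert 1 ((\<lambda>m. N m \<bullet> dP P) ` (P \<inter> {..<k})))" for P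
    define KP where "KP P = (if feas P then ((2 / cP P + 1) * real (n - 1)) ^ (n - 1) * (96 * Wf (dP P) * 2 ^ (n - 3)) else 0)" for P
    have dPp: "N k \<bullet> dP P = 0 \<and> norm (dP P) = 1 \<and> (\<forall>m\<in>P. m < k \<longrightarrow> N m \<bullet> dP P > 0)" if "feas P" for P
      using someI_ex[OF that[unfolded feas_def]] by (simp add: dP_def)
    have cPp: "cP P > 0 \<and> (\<forall>m\<in>P. m < k \<longrightarrow> N m \<bullet> dP P \<ge> cP P)" if "feas P" for P
    proof
      show "cP P > 0" unfolding cP_def using dPp[OF that] by (subst Min_gr_iff) auto
      show "\<forall>m\<in>P. m < k \<longrightarrow> N m \<bullet> dP P \<ge> cP P" unfolding cP_def by (auto intro!: Min_le)
    qed
    have KP0: "KP P \<ge> 0" for P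
    proof (cases "feas P")
      case True
      have "cP P > 0" using cPp[OF True] by blast
      then have "2 / cP P + 1 > 0" by (smt (verit) divide_pos_pos)
      moreover have "Wf (dP P) > 0" using ell dPp[OF True] by blast
      ultimately show ?thesis using True by (simp add: KP_def)
    qed (simp add: KP_def)
    define g where "g = min \<tau>1 \<beta> / (2 * real q + 4)"
    have gp: "g > 0" using \<tau>1 \<beta> by (simp add: g_def)
    have g1: "(2 * real q + 3) * g < \<tau>1" "(2 * real q + 3) * g < \<beta>"
    proof -
      have "(2 * real q + 3) * g < (2 * real q + 4) * g" using gp by simp
      also have "\<dots> = min \<tau>1 \<beta>" by (simp add: g_def)
      finally show "(2 * real q + 3) * g < \<tau>1" "(2 * real q + 3) * g < \<beta>" by auto
    qed
    define C where "C = hausdorff_const (real n - 1) * (real (q + 2) * (\<Sum>P\<in>Pow {0..q}. KP P))"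
    show ?thesis
    proof (rule exI[of _ C], intro allI impI)
      fix \<gamma> :: real assume \<gamma>: "0 < \<gamma> \<and> \<gamma> < 1/2"
      define lbar where "lbar = max 1 (max ((real q + 2) / g) (max (4 / \<tau>1) (4 / \<beta>)))"
      show "\<exists>lbar. \<forall>lam0 \<ge> lbar. \<forall>p r. 1 / lam0 \<le> r \<and> r \<le> 1 \<longrightarrow>
              hausdorff_measure (real (DIM('a)) - 1)
                (\<Omega> \<inter> {x. uhat \<eta> \<gamma> lam0 u k x = 0}
                   \<inter> {x. - 2 / lam \<gamma> lam0 k \<le> uhat \<eta> \<gamma> lam0 u (k - 1) x \<and> uhat \<eta> \<gamma> lam0 u (k - 1) x \<le> 0}
                   \<inter> {x. - 2 / lam \<gamma> lam0 k \<le> u k x \<and> u k x \<le> 0}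
                   \<inter> {x. - 4 / lam0 \<le> u j x \<and> u j x \<le> 0}
                   \<inter> {x. - 6 / lam0 \<le> u i x \<and> u i x \<le> 0}
                   \<inter> ball p r)
              \<le> ennreal (C * (1 / lam \<gamma> lam0 k) * (1 / lam0) * r ^ (DIM('a) - 3))"
      proof (intro exI[of _ lbar] allI impI)
        fix lam0 :: real and p :: 'a and r :: real assume l0: "lbar \<le> lam0" and rr: "1 / lam0 \<le> r \<and> r \<le> 1"
        define S where "S = \<Omega> \<inter> {x. uhat \<eta> \<gamma> lam0 u k x = 0}
                   \<inter> {x. - 2 / lam \<gamma> lam0 k \<le> uhat \<eta> \<gamma> lam0 u (k - 1) x \<and> uhat \<eta> \<gamma> lam0 u (k - 1) x \<le> 0}
                   \<inter> {x. - 2 / lam \<gamma> lam0 k \<le> u k x \<and> u k x \<le> 0}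
                   \<inter> {x. - 4 / lam0 \<le> u j x \<and> u j x \<le> 0}
                   \<inter> {x. - 6 / lam0 \<le> u i x \<and> u i x \<le> 0}
                   \<inter> ball p r"
        have l0p: "lam0 > 0" "lam0 \<ge> 1" using l0 by (auto simp: lbar_def)
        have glam: "real q + 2 \<le> g * lam0"
        proof -
          have "(real q + 2) / g \<le> lam0" using l0 by (simp add: lbar_def)
          then show ?thesis using gp by (simp add: field_simps)
        qed
        have t1: "4 / lam0 \<le> \<tau>1" "4 / lam0 \<le> \<beta>"
        proof -
          have "4 / \<tau>1 \<le> lam0" "4 / \<beta> \<le> lam0" using l0 by (auto simp: lbar_def)
          then show "4 / lam0 \<le> \<tau>1" "4 / lam0 \<le> \<beta>" using \<tau>1 \<beta> l0p by (simp_all add: field_simps)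
        qed
        have t24: "2 / lam0 < 4 / lam0" using l0p by (simp add: divide_strict_right_mono)
        have t2: "2 / lam0 < \<beta>" "2 / lam0 < \<tau>1" using t1 t24 by linarith+
        define lk where "lk = lam \<gamma> lam0 k"
        have lk1: "lk \<ge> lam0" using lamge[OF l0p(1)] \<gamma> by (auto simp: lk_def)
        have lk: "lk \<ge> lam0" "lk > 0" using lk1 l0p by auto
        have i2: "2 / lk \<le> 2 / lam0" using lk l0p by (simp add: frac_le)
        have rp: "r > 0" using rr l0p by (smt (verit) divide_pos_pos)
        define piece where "piece s P = {x\<in>S. \<forall>m\<le>q. (m \<in> P \<longrightarrow> - (2 * real s + 1) * g \<le> u m x) \<and> (m \<notin> P \<longrightarrow> u m x < - (2 * real s + 2) * g)}" for s :: nat and P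
        define J where "J = {0..q+1} \<times> Pow {0..q}"
        define X where "X = (1 / lk) * (1 / lam0) * r ^ (n - 3)"
        have X0: "X \<ge> 0" using lk l0p rp by (simp add: X_def)
        have cov: "S \<subseteq> (\<Union>sP\<in>J. piece (fst sP) (snd sP))"
        proof
          fix x assume xS: "x \<in> S"
          obtain s where s: "s \<le> q + 1" "\<forall>m\<le>q. \<not> (- (2 * real s + 2) * g \<le> u m x \<and> u m x < - (2 * real s + 1) * g)"
            using pigeon[OF gp, of q "\<lambda>m. u m x"] by blast
          define P where "P = {m. m \<le> q \<and> - (2 * real s + 1) * g \<le> u m x}"
          have PJ: "(s, P) \<in> J" unfolding J_def P_def using s by auto
          have "x \<in> piece s P" unfolding piece_def
          proof (intro CollectI conjI allI impI xS)
            fix m assume m: "m \<le> q"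
            show "m \<in> P \<Longrightarrow> - (2 * real s + 1) * g \<le> u m x" by (simp add: P_def)
            show "m \<notin> P \<Longrightarrow> u m x < - (2 * real s + 2) * g"
            proof -
              assume "m \<notin> P"
              then have "u m x < - (2 * real s + 1) * g" using m by (auto simp: P_def)
              then show ?thesis using s(2) m by fastforce
            qed
          qed
          then show "x \<in> (\<Union>sP\<in>J. piece (fst sP) (snd sP))" using PJ by force
        qed
        have pb: "\<exists>F. finite F \<and> piece s P \<subseteq> \<Union>F \<and> (\<forall>c\<in>F. bounded c \<and> diameter c \<le> \<delta>)
                  \<and> (\<Sum>c\<in>F. (diameter c / 2) powr (real n - 1)) \<le> KP P * X"
          if sP: "s \<le> q + 1" "P \<subseteq> {0..q}" and dp: "\<delta> > 0" for s P \<delta>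
        proof (cases "piece s P = {}")
          case True
          have "0 \<le> KP P * X" using KP0 X0 by simp
          then show ?thesis using True by (intro exI[of _ "{}"]) simp
        next
          case False
          then obtain x1 where x1: "x1 \<in> piece s P" by blast
          define \<alpha> where "\<alpha> = - (2 * real s + 1) * g"
          have pcx: "x \<in> S \<and> (\<forall>m\<le>q. (m \<in> P \<longrightarrow> \<alpha> \<le> u m x) \<and> (m \<notin> P \<longrightarrow> u m x < \<alpha> - g))"
            if "x \<in> piece s P" for x
            using that by (simp add: piece_def \<alpha>_def algebra_simps)
          have Sx: "x \<in> \<Omega> \<and> uhat \<eta> \<gamma> lam0 u k x = 0 \<and> - 2 / lk \<le> uhat \<eta> \<gamma> lam0 u (k - 1) x \<and> uhat \<eta> \<gamma> lam0 u (k - 1) x \<le> 0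
              \<and> - 2 / lk \<le> u k x \<and> u k x \<le> 0 \<and> - 4 / lam0 \<le> u j x \<and> u j x \<le> 0 \<and> - 6 / lam0 \<le> u i x \<and> u i x \<le> 0
              \<and> dist p x < r" if "x \<in> S" for x
            using that by (simp add: S_def lk_def)
          have \<alpha>ge: "\<alpha> \<ge> - (2 * real q + 3) * g" using sP(1) gp by (simp add: \<alpha>_def mult_right_mono)
          have pos3: "lam0 > 0" "0 < \<gamma>" "\<gamma> \<le> 1" using l0p \<gamma> by auto
          have irr: "real k \<le> 2 * g * lam0" using glam idx(3) gp by simp
          have ex: "\<exists>l\<le>k-1. l \<in> P"
          proof (rule ccontr)
            assume nex: "\<not> (\<exists>l\<le>k-1. l \<in> P)"
            have irr': "real (k - 1 + 1) \<le> 2 * g * lam0" using irr idx(7) by simp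
            have H: "\<forall>l\<le>k-1. (l \<in> P \<longrightarrow> u l x1 = u l x1 \<and> \<alpha> \<le> u l x1) \<and> (l \<notin> P \<longrightarrow> u l x1 \<le> \<alpha> - g \<and> u l x1 \<le> \<alpha> - g)"
            proof (intro allI impI)
              fix l assume l: "l \<le> k - 1"
              then have lq: "l \<le> q" using idx(3) by linarith
              have "l \<notin> P" using nex l by blast
              then show "(l \<in> P \<longrightarrow> u l x1 = u l x1 \<and> \<alpha> \<le> u l x1) \<and> (l \<notin> P \<longrightarrow> u l x1 \<le> \<alpha> - g \<and> u l x1 \<le> \<alpha> - g)"
                using pcx[OF x1] lq by fastforce
            qed
            have "uhat \<eta> \<gamma> lam0 u (k-1) x1 \<le> \<alpha> - g + real (k-1) / (2 * lam0)"
              using etaL.uhat_irrel[OF eL pos3 irr', where u=u and v=u and x=x1 and y=x1 and P=P and \<alpha>=\<alpha>] H nex by blast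
            moreover have "real (k-1) / (2 * lam0) \<le> real q / (2 * lam0)" using l0p idx(3) by (simp add: divide_right_mono)
            moreover have "- 2 / lk \<le> uhat \<eta> \<gamma> lam0 u (k - 1) x1" using Sx pcx[OF x1] by blast
            moreover have "\<alpha> - g \<le> - 2 * g" using gp by (simp add: \<alpha>_def algebra_simps)
            ultimately have A: "- 2 / lam0 \<le> - 2 * g + real q / (2 * lam0)" using i2 by linarith
            have "- 2 \<le> - 2 * g * lam0 + real q / 2"
            proof -
              have "(- 2 / lam0) * lam0 \<le> (- 2 * g + real q / (2 * lam0)) * lam0"
                using A l0p by (intro mult_right_mono) auto
              moreover have "(- 2 / lam0) * lam0 = - 2" using l0p by simp
              moreover have "(- 2 * g + real q / (2 * lam0)) * lam0 = - 2 * g * lam0 + real q / 2"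
                using l0p by (simp add: algebra_simps)
              ultimately show ?thesis by linarith
            qed
            then show False using glam by linarith
          qed
          have feasP: "feas P"
          proof -
            define e where "e = x1 - x0"
            define dx where "dx = e - (N k \<bullet> e) *\<^sub>R N k"
            have x1S: "x1 \<in> S" using pcx[OF x1] by blast
            have x1O: "x1 \<in> \<Omega>" using Sx[OF x1S] by blast
            have Nke: "N k \<bullet> e > 0"
            proof -
              have "N k \<bullet> e = u k x1 - u k x0" using ud idx(3) by (simp add: e_def)
              moreover have "u k x1 \<ge> - 2 / lam0" using Sx[OF x1S] i2 by linarith
              moreover have "u k x0 \<le> - \<beta>" using \<beta> idx(3) by blast
              moreover have "2 / lam0 < \<beta>" by (rule t2(1))
              ultimately show ?thesis by linarith
            qed
            have Nkdx: "N k \<bullet> dx = 0" using NN[OF idx(3)] by (simp add: dx_def inner_diff_right)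
            have Nmdx: "N m \<bullet> dx > 0" if m: "m \<in> P" "m < k" for m
            proof -
              have mq: "m \<le> q" using m idx(3) by linarith
              have um: "u m x1 \<ge> \<alpha>" using pcx[OF x1] m mq by blast
              have Nme: "N m \<bullet> e > 0"
              proof -
                have "N m \<bullet> e = u m x1 - u m x0" using ud mq by (simp add: e_def)
                moreover have "u m x0 \<le> - \<beta>" using \<beta> mq by blast
                ultimately show ?thesis using um \<alpha>ge g1(2) by linarith
              qed
              have NmNk: "N m \<bullet> N k \<le> 0"
              proof (rule ccontr)
                assume "\<not> N m \<bullet> N k \<le> 0"
                then have "min (u m x1) (u k x1) \<le> - \<tau>1" using \<tau>1(2) m(2) x1O by force
                moreover have "u k x1 \<ge> - 2 / lam0" using Sx[OF x1S] i2 by linarith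
                moreover have "2 / lam0 < \<tau>1" by (rule t2(2))
                ultimately show False using um \<alpha>ge g1(1) by linarith
              qed
              have "N m \<bullet> dx = N m \<bullet> e - (N k \<bullet> e) * (N m \<bullet> N k)" by (simp add: dx_def inner_diff_right)
              moreover have "(N k \<bullet> e) * (N m \<bullet> N k) \<le> 0" using Nke NmNk by (simp add: mult_nonneg_nonpos)
              ultimately show ?thesis using Nme by linarith
            qed
            obtain l0 where l0: "l0 \<le> k - 1" "l0 \<in> P" using ex by blast
            have "l0 < k" using l0 idx(7) by linarith
            then have "N l0 \<bullet> dx > 0" using Nmdx l0 by blast
            then have dxnz: "dx \<noteq> 0" by auto
            define d where "d = dx /\<^sub>R norm dx"
            have "N k \<bullet> d = 0" using Nkdx by (simp add: d_def)
            moreover have "norm d = 1" using dxnz by (simp add: d_def)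
            moreover have "\<forall>m\<in>P. m < k \<longrightarrow> N m \<bullet> d > 0" using Nmdx dxnz by (simp add: d_def)
            ultimately show ?thesis unfolding feas_def by blast
          qed
          define d where "d = dP P"
          define c where "c = cP P"
          define lv where "lv = ellf d"
          define W where "W = Wf d"
          define B where "B = Bf d lv"
          have dpr: "N k \<bullet> d = 0" "norm d = 1" using dPp[OF feasP] by (auto simp: d_def)
          have cpr: "c > 0" "\<forall>m\<in>P. m < k \<longrightarrow> N m \<bullet> d \<ge> c" using cPp[OF feasP] by (auto simp: c_def d_def)
          have lpr: "norm lv = 1" "lv \<bullet> d = 0" "lv \<bullet> N k = 0" "W > 0"
               "\<forall>x. \<bar>lv \<bullet> (x - z0)\<bar> \<le> W * (\<bar>u i x\<bar> + \<bar>u j x\<bar> + \<bar>u k x\<bar>)"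
            using ell dpr by (auto simp: lv_def W_def)
          have Bpr: "Phi d lv B" unfolding B_def by (rule Bf) (use dpr lpr in auto)
          have Bp: "finite B" "\<forall>e\<in>B. norm e = 1" "pairwise orthogonal B" "\<forall>e\<in>B. e \<bullet> d = 0 \<and> e \<bullet> N k = 0 \<and> e \<bullet> lv = 0"
             "card B + 3 = DIM('a)" "\<And>w. (norm w)\<^sup>2 = (w \<bullet> d)\<^sup>2 + (w \<bullet> N k)\<^sup>2 + (w \<bullet> lv)\<^sup>2 + (\<Sum>e\<in>B. (w \<bullet> e)\<^sup>2)"
            using Bpr unfolding Phi_def by blast+
          have Tp: "\<forall>x\<in>piece s P. uhat \<eta> \<gamma> lam0 u k x = 0 \<and> - 2 / lam \<gamma> lam0 k \<le> uhat \<eta> \<gamma> lam0 u (k-1) x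
              \<and> uhat \<eta> \<gamma> lam0 u (k-1) x \<le> 0 \<and> - 2 / lam \<gamma> lam0 k \<le> u k x \<and> u k x \<le> 0 \<and> dist p x < r
              \<and> \<bar>lv \<bullet> (x - z0)\<bar> \<le> 12 * W / lam0
              \<and> (\<forall>l\<le>k-1. (l \<in> P \<longrightarrow> \<alpha> \<le> u l x) \<and> (l \<notin> P \<longrightarrow> u l x < \<alpha> - g)) \<and> (\<exists>l\<le>k-1. l \<in> P)"
          proof
            fix x assume xp: "x \<in> piece s P"
            have xS: "x \<in> S" using pcx[OF xp] by blast
            note sx = Sx[OF xS]
            have ab: "\<bar>u i x\<bar> + \<bar>u j x\<bar> + \<bar>u k x\<bar> \<le> 12 / lam0"
            proof -
              have "\<bar>u i x\<bar> \<le> 6 / lam0" "\<bar>u j x\<bar> \<le> 4 / lam0" "\<bar>u k x\<bar> \<le> 2 / lam0" using sx i2 by auto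
              moreover have "6 / lam0 + 4 / lam0 + 2 / lam0 = 12 / lam0" by (simp add: add_divide_distrib[symmetric])
              ultimately show ?thesis by linarith
            qed
            have lvb: "\<bar>lv \<bullet> (x - z0)\<bar> \<le> 12 * W / lam0"
            proof -
              have "\<bar>lv \<bullet> (x - z0)\<bar> \<le> W * (\<bar>u i x\<bar> + \<bar>u j x\<bar> + \<bar>u k x\<bar>)" using lpr(5) by blast
              also have "\<dots> \<le> W * (12 / lam0)" using ab lpr(4) by (intro mult_left_mono) auto
              also have "\<dots> = 12 * W / lam0" by simp
              finally show ?thesis .
            qed
            have pl: "\<forall>l\<le>k-1. (l \<in> P \<longrightarrow> \<alpha> \<le> u l x) \<and> (l \<notin> P \<longrightarrow> u l x < \<alpha> - g)"
            proof (intro allI)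
              fix l show "l \<le> k - 1 \<longrightarrow> (l \<in> P \<longrightarrow> \<alpha> \<le> u l x) \<and> (l \<notin> P \<longrightarrow> u l x < \<alpha> - g)"
              proof
                assume "l \<le> k - 1"
                then have lq: "l \<le> q" using idx(3) by linarith
                then show "(l \<in> P \<longrightarrow> \<alpha> \<le> u l x) \<and> (l \<notin> P \<longrightarrow> u l x < \<alpha> - g)" using pcx[OF xp] by blast
              qed
            qed
            show "uhat \<eta> \<gamma> lam0 u k x = 0 \<and> - 2 / lam \<gamma> lam0 k \<le> uhat \<eta> \<gamma> lam0 u (k-1) x
              \<and> uhat \<eta> \<gamma> lam0 u (k-1) x \<le> 0 \<and> - 2 / lam \<gamma> lam0 k \<le> u k x \<and> u k x \<le> 0 \<and> dist p x < r
              \<and> \<bar>lv \<bullet> (x - z0)\<bar> \<le> 12 * W / lam0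
              \<and> (\<forall>l\<le>k-1. (l \<in> P \<longrightarrow> \<alpha> \<le> u l x) \<and> (l \<notin> P \<longrightarrow> u l x < \<alpha> - g)) \<and> (\<exists>l\<le>k-1. l \<in> P)"
              using sx lvb pl ex by (simp add: lk_def)
          qed
          have "\<exists>F. finite F \<and> piece s P \<subseteq> \<Union>F \<and> (\<forall>c\<in>F. bounded c \<and> diameter c \<le> \<delta>)
             \<and> (\<Sum>c\<in>F. (diameter c / 2) powr (real DIM('a) - 1))
                \<le> ((2 / c + 1) * real (DIM('a) - 1)) ^ (DIM('a) - 1) * (96 * W * 2 ^ (DIM('a) - 3))
                   * (1 / lam \<gamma> lam0 k) * (1 / lam0) * r ^ (DIM('a) - 3)"
            by (rule piece_bound[where T="piece s P" and \<alpha>=\<alpha> and zz=z0 and P=P, OF eL pos3 idx(7) idx(3) dim unit ud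
                 dpr(2) dpr(1) cpr(1) cpr(2) lpr(1-4) Bp(1-5) Bp(6) irr rp dp Tp])
          moreover have "((2 / c + 1) * real (DIM('a) - 1)) ^ (DIM('a) - 1) * (96 * W * 2 ^ (DIM('a) - 3))
                   * (1 / lam \<gamma> lam0 k) * (1 / lam0) * r ^ (DIM('a) - 3) = KP P * X"
            using feasP by (simp add: KP_def X_def c_def W_def d_def n_def lk_def)
          ultimately show ?thesis by (simp add: n_def)
        qed
        have all: "\<forall>\<delta>>0. \<exists>F. finite F \<and> S \<subseteq> \<Union>F \<and> (\<forall>c\<in>F. bounded c \<and> diameter c \<le> \<delta>)
                  \<and> (\<Sum>c\<in>F. (diameter c / 2) powr (real n - 1)) \<le> (\<Sum>sP\<in>J. KP (snd sP) * X)"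
        proof (intro allI impI)
          fix \<delta> :: real assume dp: "\<delta> > 0"
          have finJ: "finite J" by (simp add: J_def)
          have pos: "\<forall>c. (diameter c / 2) powr (real n - 1) \<ge> 0" by simp
          have pbJ: "\<forall>sP\<in>J. \<exists>F. finite F \<and> piece (fst sP) (snd sP) \<subseteq> \<Union>F \<and> (\<forall>c\<in>F. bounded c \<and> diameter c \<le> \<delta>)
                  \<and> (\<Sum>c\<in>F. (diameter c / 2) powr (real n - 1)) \<le> KP (snd sP) * X"
          proof
            fix sP assume "sP \<in> J"
            then have "fst sP \<le> q + 1" "snd sP \<subseteq> {0..q}" by (auto simp: J_def)
            then show "\<exists>F. finite F \<and> piece (fst sP) (snd sP) \<subseteq> \<Union>F \<and> (\<forall>c\<in>F. bounded c \<and> diameter c \<le> \<delta>)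
                  \<and> (\<Sum>c\<in>F. (diameter c / 2) powr (real n - 1)) \<le> KP (snd sP) * X"
              using pb dp by blast
          qed
          obtain F where F: "finite F" "(\<Union>sP\<in>J. piece (fst sP) (snd sP)) \<subseteq> \<Union>F" "\<forall>c\<in>F. bounded c \<and> diameter c \<le> \<delta>"
                  "(\<Sum>c\<in>F. (diameter c / 2) powr (real n - 1)) \<le> (\<Sum>sP\<in>J. KP (snd sP) * X)"
            using cover_union[OF finJ pos pbJ] by blast
          have "S \<subseteq> \<Union>F" using cov F(2) by (rule subset_trans)
          then show "\<exists>F. finite F \<and> S \<subseteq> \<Union>F \<and> (\<forall>c\<in>F. bounded c \<and> diameter c \<le> \<delta>)
                  \<and> (\<Sum>c\<in>F. (diameter c / 2) powr (real n - 1)) \<le> (\<Sum>sP\<in>J. KP (snd sP) * X)"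
            using F(1,3,4) by blast
        qed
        have "hausdorff_measure (real n - 1) S \<le> ennreal (hausdorff_const (real n - 1) * (\<Sum>sP\<in>J. KP (snd sP) * X))"
        proof (rule hm_le)
          show "0 < real n - 1" using dim by (simp add: n_def)
        qed (rule all)
        also have "(\<Sum>sP\<in>J. KP (snd sP) * X) = real (q + 2) * (\<Sum>P\<in>Pow {0..q}. KP P) * X"
        proof -
          have "(\<Sum>sP\<in>J. KP (snd sP) * X) = (\<Sum>(s, P)\<in>J. KP P * X)" by (rule sum.cong) auto
          also have "\<dots> = (\<Sum>s\<in>{0..q+1}. \<Sum>P\<in>Pow {0..q}. KP P * X)"
            unfolding J_def by (rule sum.cartesian_product[symmetric])
          also have "\<dots> = real (q + 2) * (\<Sum>P\<in>Pow {0..q}. KP P) * X"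
            by (simp add: sum_distrib_right)
          finally show ?thesis .
        qed
        finally show "hausdorff_measure (real (DIM('a)) - 1) S \<le> ennreal (C * (1 / lam \<gamma> lam0 k) * (1 / lam0) * r ^ (DIM('a) - 3))"
          by (simp add: C_def X_def lk_def n_def mult.assoc)
      qed
    qed
  qed
qed


end
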